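(* Let $X$ be a closed subspace of a real Banach space $Y$. The following are equivalent: (a) The pair $(X,Y)$ has the Daugavet property. (b) For every $\varepsilon>0$, every $y\in S(Y)$ and every weakly open set $U\subset X$ with $U\cap B(X)\neq\emptyset$, there is a weakly open set $V\subset X$ with $V\cap B(X)\neq\emptyset$ and $V\cap B(X)\subset U\cap B(X)$ such that $\|v+y\|>2-\varepsilon$ for every $v\in V\cap B(X)$. (c) For every $\varepsilon>0$, every $x^*\in S(X^* )$ and every weak$^*$ open set $U\subset Y^*$ with $U\cap B(Y^* )\neq\emptyset$, there is a weak$^*$ open set $V\subset Y^*$ with $V\cap B(Y^* )\neq\emptyset$ and $V\cap B(Y^* )\subset U\cap B(Y^* )$ such that $\|v|_X+x^*\|>2-\varepsilon$ for every $v\in V\cap B(Y^* )$.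
   Context: $B(Z)$ and $S(Z)$ denote the closed unit ball and unit sphere of a Banach space $Z$. If $X$ is a closed subspace of a Banach space $Y$ and $J:X\to Y$ is the inclusion map, the pair $(X,Y)$ is said to have the Daugavet property (to be a Daugavet pair) if every bounded linear operator $T:X\to Y$ of rank one satisfies $\|J+T\|=1+\|T\|$. For $v\in Y^*$, $v|_X$ denotes its restriction to $X$. *)

theory Defs
  imports "HOL-Analysis.Analysis"
begin

text \<open>Linear maps defined on a subspace X (values outside X are irrelevant).\<close>
definition lin_on :: "'a::real_vector set \<Rightarrow> ('a \<Rightarrow> 'b::real_vector) \<Rightarrow> bool" where
  "lin_on X T \<longleftrightarrow> (\<forall>x\<in>X. \<forall>y\<in>X. T (x + y) = T x + T y) \<and> (\<forall>c. \<forall>x\<in>X. T (c *\<^sub>R x) = c *\<^sub>R T x)"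

definition bdd_lin_on :: "'a::real_normed_vector set \<Rightarrow> ('a \<Rightarrow> 'b::real_normed_vector) \<Rightarrow> bool" where
  "bdd_lin_on X T \<longleftrightarrow> lin_on X T \<and> (\<exists>K. \<forall>x\<in>X. norm (T x) \<le> K * norm x)"

definition unit_ball_on :: "'a::real_normed_vector set \<Rightarrow> 'a set" where
  "unit_ball_on X = {x\<in>X. norm x \<le> 1}"

definition op_norm_on :: "'a::real_normed_vector set \<Rightarrow> ('a \<Rightarrow> 'b::real_normed_vector) \<Rightarrow> real" where
  "op_norm_on X T = (SUP x\<in>unit_ball_on X. norm (T x))"

definition daugavet_pair :: "'y::real_normed_vector set \<Rightarrow> bool" where
  "daugavet_pair X \<longleftrightarrow> (\<forall>T :: 'y \<Rightarrow> 'y. bdd_lin_on X T \<and> dim (span (T ` X)) = 1 \<longrightarrow>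
      op_norm_on X (\<lambda>x. x + T x) = 1 + op_norm_on X T)"

definition dual_on :: "'a::real_normed_vector set \<Rightarrow> ('a \<Rightarrow> real) set" where
  "dual_on X = {f. bdd_lin_on X f}"

definition weak_top :: "'a::real_normed_vector set \<Rightarrow> 'a topology" where
  "weak_top X = topology_generated_by {{x\<in>X. f x \<in> W} | f W. f \<in> dual_on X \<and> open W}"

definition dual_space :: "('a::real_normed_vector \<Rightarrow> real) set" where
  "dual_space = {v. bounded_linear v}"

definition weak_star_top :: "('a::real_normed_vector \<Rightarrow> real) topology" where
  "weak_star_top = topology_generated_by {{v\<in>dual_space. v y \<in> W} | y W. open W}"

definition dual_unit_ball :: "('a::real_normed_vector \<Rightarrow> real) set" where
  "dual_unit_ball = {v\<in>dual_space. onorm v \<le> 1}"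

end

theory Submission
  imports Defs
begin

definition hbg :: "('a::real_normed_vector \<times> real) set \<Rightarrow> bool" where
 "hbg G \<longleftrightarrow> (0,0)\<in>G \<and> (\<forall>x a y b. (x,a)\<in>G \<longrightarrow> (y,b)\<in>G \<longrightarrow> (x+y,a+b)\<in>G)
    \<and> (\<forall>x a c. (x,a)\<in>G \<longrightarrow> (c *\<^sub>R x, c*a)\<in>G) \<and> (\<forall>x a. (x,a)\<in>G \<longrightarrow> a \<le> norm x)"

lemma hbgD:
  assumes "hbg G"
  shows "(0,0)\<in>G" "\<And>x a y b. (x,a)\<in>G \<Longrightarrow> (y,b)\<in>G \<Longrightarrow> (x+y,a+b)\<in>G"
    "\<And>x a c. (x,a)\<in>G \<Longrightarrow> (c *\<^sub>R x, c*a)\<in>G" "\<And>x a. (x,a)\<in>G \<Longrightarrow> a \<le> norm x"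
  using assms unfolding hbg_def by blast+

lemma hbg_fun:
  assumes "hbg G" "(x,a)\<in>G" "(x,b)\<in>G" shows "a = b"
proof -
  have n: "(-x, -b) \<in> G" "(-x,-a)\<in>G" using assms unfolding hbg_def
    by (metis mult_minus1 scaleR_minus1_left)+
  have "(x + -x, a + -b) \<in> G" "(x + -x, b + -a) \<in> G" using assms n unfolding hbg_def by blast+
  then have "a - b \<le> 0" "b - a \<le> 0" using assms(1) unfolding hbg_def by fastforce+
  then show ?thesis by simp
qed

lemma hbg_extend:
  assumes G: "hbg G" and z: "z \<notin> fst ` G"
  shows "\<exists>G'. hbg G' \<and> G \<subseteq> G' \<and> G' \<noteq> G"
proof -
  define r where "r = (SUP p\<in>G. snd p - norm (fst p - z))"
  have key: "a - norm (x - z) \<le> norm (w + z) - b" if "(x,a)\<in>G" "(w,b)\<in>G" for x a w b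
  proof -
    have "(x+w, a+b)\<in>G" using G that unfolding hbg_def by blast
    then have "a + b \<le> norm (x + w)" using G unfolding hbg_def by blast
    also have "norm (x + w) \<le> norm (x - z) + norm (w + z)"
      using norm_triangle_ineq[of "x - z" "w + z"] by simp
    finally show ?thesis by simp
  qed
  have ne: "G \<noteq> {}" using G unfolding hbg_def by blast
  have G00: "(0,0) \<in> G" using G unfolding hbg_def by blast
  have bdd: "bdd_above ((\<lambda>p. snd p - norm (fst p - z)) ` G)"
  proof (rule bdd_aboveI[where M="norm z"])
    fix u assume "u \<in> (\<lambda>p. snd p - norm (fst p - z)) ` G"
    then obtain x a where "(x,a)\<in>G" "u = a - norm (x - z)" by auto
    then show "u \<le> norm z" using key[OF _ G00, of x a] by simp
  qed
  have rup: "a - norm (x - z) \<le> r" if "(x,a)\<in>G" for x a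
    unfolding r_def using cSUP_upper[OF that bdd] by simp
  have rlow: "r \<le> norm (w + z) - b" if "(w,b)\<in>G" for w b
    unfolding r_def using key[OF _ that] ne by (intro cSUP_least) auto
  define G' where "G' = {(x + t *\<^sub>R z, a + t * r) | x a t. (x,a)\<in>G}"
  have "hbg G'"
    unfolding hbg_def
  proof (intro conjI allI impI)
    have "(0 + 0 *\<^sub>R z, 0 + 0 * r) \<in> G'" unfolding G'_def using G00 by blast
    then show "(0,0) \<in> G'" by simp
  next
    fix x a y b assume "(x,a)\<in>G'" "(y,b)\<in>G'"
    then obtain x1 a1 t1 x2 a2 t2 where "(x1,a1)\<in>G" "(x2,a2)\<in>G"
      "x = x1 + t1 *\<^sub>R z" "a = a1 + t1*r" "y = x2 + t2 *\<^sub>R z" "b = a2 + t2*r"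
      unfolding G'_def by blast
    moreover have "(x1+x2,a1+a2)\<in>G" using G calculation unfolding hbg_def by blast
    ultimately show "(x+y,a+b)\<in>G'" unfolding G'_def
      by (rule_tac CollectI, rule_tac x="x1+x2" in exI, rule_tac x="a1+a2" in exI, rule_tac x="t1+t2" in exI)
        (simp add: algebra_simps)
  next
    fix x a c assume "(x,a)\<in>G'"
    then obtain x1 a1 t1 where "(x1,a1)\<in>G" "x = x1 + t1 *\<^sub>R z" "a = a1 + t1*r"
      unfolding G'_def by blast
    moreover have "(c *\<^sub>R x1, c*a1)\<in>G" using G calculation unfolding hbg_def by blast
    ultimately show "(c *\<^sub>R x, c*a)\<in>G'" unfolding G'_def
      by (rule_tac CollectI, rule_tac x="c *\<^sub>R x1" in exI, rule_tac x="c*a1" in exI, rule_tac x="c*t1" in exI)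
        (simp add: algebra_simps)
  next
    fix x a assume "(x,a)\<in>G'"
    then obtain x1 a1 t where x1: "(x1,a1)\<in>G" and xe: "x = x1 + t *\<^sub>R z" and ae: "a = a1 + t*r"
      unfolding G'_def by blast
    consider "t > 0" | "t < 0" | "t = 0" by linarith
    then show "a \<le> norm x"
    proof cases
      case 1
      have "((1/t) *\<^sub>R x1, (1/t)*a1)\<in>G" using G x1 unfolding hbg_def by blast
      from rlow[OF this] have "t * r \<le> t * (norm ((1/t) *\<^sub>R x1 + z) - (1/t)*a1)"
        using 1 by (intro mult_left_mono) auto
      also have "\<dots> = t * norm ((1/t) *\<^sub>R x1 + z) - a1" using 1 by (simp add: right_diff_distrib)
      also have "t * norm ((1/t) *\<^sub>R x1 + z) = norm (t *\<^sub>R ((1/t) *\<^sub>R x1 + z))" using 1 by simp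
      also have "t *\<^sub>R ((1/t) *\<^sub>R x1 + z) = x" using 1 xe by (simp add: algebra_simps)
      finally show ?thesis using ae by simp
    next
      case 2
      define s where "s = -t"
      have s: "s > 0" using 2 s_def by simp
      have "((1/s) *\<^sub>R x1, (1/s)*a1)\<in>G" using G x1 unfolding hbg_def by blast
      from rup[OF this] have "s * ((1/s)*a1 - norm ((1/s) *\<^sub>R x1 - z)) \<le> s * r"
        using s by (intro mult_left_mono) auto
      moreover have "s * ((1/s)*a1 - norm ((1/s) *\<^sub>R x1 - z)) = a1 - s * norm ((1/s) *\<^sub>R x1 - z)"
        using s by (simp add: right_diff_distrib)
      moreover have "s * norm ((1/s) *\<^sub>R x1 - z) = norm (s *\<^sub>R ((1/s) *\<^sub>R x1 - z))" using s by simp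
      moreover have "s *\<^sub>R ((1/s) *\<^sub>R x1 - z) = x" using s xe s_def by (simp add: algebra_simps)
      ultimately have "a1 - norm x \<le> s * r" by simp
      moreover have "t * r = - (s * r)" using s_def by simp
      ultimately show ?thesis using ae by linarith
    next
      case 3
      then show ?thesis using G x1 xe ae unfolding hbg_def by simp
    qed
  qed
  moreover have "G \<subseteq> G'"
  proof
    fix p assume "p \<in> G"
    moreover obtain x a where "p = (x,a)" by fastforce
    ultimately have "(x + 0 *\<^sub>R z, a + 0 * r) \<in> G'" unfolding G'_def by blast
    then show "p \<in> G'" using \<open>p = (x,a)\<close> by simp
  qed
  moreover
  have zr0: "(0 + 1 *\<^sub>R z, 0 + 1 * r) \<in> G'" unfolding G'_def using G00 by blast
  have zr: "(z, r) \<in> G'" using zr0 by simp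
  have "(z, r) \<notin> G" using z by (metis fst_conv image_eqI)
  then have "G' \<noteq> G" using zr by blast
  ultimately show ?thesis by blast
qed

lemma hahn_banach_norming:
  fixes y :: "'a::real_normed_vector"
  shows "\<exists>f. bounded_linear f \<and> (\<forall>x. \<bar>f x\<bar> \<le> norm x) \<and> onorm f \<le> 1 \<and> f y = norm y"
proof -
  define G0 where "G0 = range (\<lambda>c. (c *\<^sub>R y, c * norm y))"
  have hG0: "hbg G0" unfolding hbg_def
  proof (intro conjI allI impI)
    show "(0, 0) \<in> G0" unfolding G0_def by (rule image_eqI[where x=0]) auto
  next
    fix x a x' b assume "(x,a) \<in> G0" "(x',b) \<in> G0"
    then obtain c d where "x = c *\<^sub>R y" "a = c * norm y" "x' = d *\<^sub>R y" "b = d * norm y"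
      unfolding G0_def by auto
    then show "(x+x',a+b) \<in> G0" unfolding G0_def
      by (intro image_eqI[where x="c+d"]) (auto simp: algebra_simps)
  next
    fix x a e assume "(x,a) \<in> G0"
    then obtain c where "x = c *\<^sub>R y" "a = c * norm y" unfolding G0_def by auto
    then show "(e *\<^sub>R x, e*a) \<in> G0" unfolding G0_def
      by (intro image_eqI[where x="e*c"]) (auto simp: algebra_simps)
  next
    fix x a assume "(x,a) \<in> G0"
    then obtain c where "x = c *\<^sub>R y" "a = c * norm y" unfolding G0_def by auto
    then show "a \<le> norm x" by (simp add: mult_right_mono)
  qed
  define A where "A = {G. hbg G \<and> G0 \<subseteq> G}"
  have "\<forall>C\<in>chains A. \<exists>U\<in>A. \<forall>X\<in>C. X \<subseteq> U"
  proof
    fix C assume C: "C \<in> chains A"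
    show "\<exists>U\<in>A. \<forall>X\<in>C. X \<subseteq> U"
    proof (cases "C = {}")
      case True then show ?thesis using hG0 unfolding A_def by auto
    next
      case False
      have CA: "\<And>G. G \<in> C \<Longrightarrow> hbg G \<and> G0 \<subseteq> G" using chainsD2[OF C] unfolding A_def by blast
      obtain G1 where G1: "G1 \<in> C" using False by blast
      have "hbg (\<Union>C)" unfolding hbg_def
      proof (intro conjI allI impI)
        show "(0,0) \<in> \<Union>C" using G1 CA[OF G1] hbgD(1) by blast
      next
        fix x a x' b assume "(x,a) \<in> \<Union>C" "(x',b) \<in> \<Union>C"
        then obtain H1 H2 where H: "H1\<in>C" "H2\<in>C" "(x,a)\<in>H1" "(x',b)\<in>H2" by blast
        show "(x+x',a+b) \<in> \<Union>C"
        proof (cases "H1 \<subseteq> H2")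
          case True
          then have "(x+x',a+b) \<in> H2" using H CA[of H2] hbgD(2) by blast
          then show ?thesis using H by blast
        next
          case False
          then have "H2 \<subseteq> H1" using chainsD[OF C H(1,2)] by blast
          then have "(x+x',a+b) \<in> H1" using H CA[of H1] hbgD(2) by blast
          then show ?thesis using H by blast
        qed
      next
        fix x a c assume "(x,a) \<in> \<Union>C"
        then obtain H where "H \<in> C" "(x,a)\<in>H" by blast
        then show "(c *\<^sub>R x, c*a) \<in> \<Union>C" using CA[of H] hbgD(3) by blast
      next
        fix x a assume "(x,a) \<in> \<Union>C"
        then obtain H where "H \<in> C" "(x,a)\<in>H" by blast
        then show "a \<le> norm x" using CA[of H] hbgD(4) by blast
      qed
      moreover have "G0 \<subseteq> \<Union>C" using G1 CA[OF G1] by blast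
      ultimately show ?thesis unfolding A_def by blast
    qed
  qed
  from Zorn_Lemma2[OF this] obtain M where MA: "M \<in> A" and Mmax: "\<forall>X\<in>A. M \<subseteq> X \<longrightarrow> X = M" by blast
  have hM: "hbg M" and G0M: "G0 \<subseteq> M" using MA unfolding A_def by auto
  have full: "\<exists>a. (x,a) \<in> M" for x
  proof (rule ccontr)
    assume "\<nexists>a. (x, a) \<in> M"
    then have "x \<notin> fst ` M" by force
    from hbg_extend[OF hM this] obtain G' where "hbg G'" "M \<subseteq> G'" "G' \<noteq> M" by blast
    moreover then have "G' \<in> A" using G0M unfolding A_def by blast
    ultimately show False using Mmax by blast
  qed
  define f where "f x = (SOME a. (x,a) \<in> M)" for x
  have fM: "(x, f x) \<in> M" for x unfolding f_def using full[of x] by (rule someI_ex)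
  have fadd: "f (x + x') = f x + f x'" for x x'
    using hbg_fun[OF hM fM[of "x+x'"] hbgD(2)[OF hM fM[of x] fM[of x']]] .
  have fscale: "f (c *\<^sub>R x) = c * f x" for c x
    using hbg_fun[OF hM fM[of "c *\<^sub>R x"] hbgD(3)[OF hM fM[of x]]] .
  have fle: "f x \<le> norm x" for x using hbgD(4)[OF hM fM] .
  have fabs: "\<bar>f x\<bar> \<le> norm x" for x
    using fle[of x] fle[of "-x"] fscale[of "-1" x] by (simp add: abs_le_iff)
  have bl: "bounded_linear f"
    by (rule bounded_linear_intro[where K=1]) (use fadd fscale fabs in auto)
  have "(1 *\<^sub>R y, 1 * norm y) \<in> G0" unfolding G0_def by blast
  then have "(y, norm y) \<in> M" using G0M by auto
  then have "f y = norm y" using hbg_fun[OF hM fM[of y]] by simp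
  moreover have "onorm f \<le> 1" using fabs by (intro onorm_bound) simp_all
  ultimately show ?thesis using bl fabs by blast
qed

definition opbnd :: "'a::real_normed_vector set \<Rightarrow> ('a \<Rightarrow> 'b::real_normed_vector) \<Rightarrow> bool" where
  "opbnd X T \<longleftrightarrow> (\<exists>B. \<forall>x\<in>unit_ball_on X. norm (T x) \<le> B)"

lemma ub_zero: "subspace X \<Longrightarrow> 0 \<in> unit_ball_on X"
  unfolding unit_ball_on_def by (simp add: subspace_0)

lemma ubD: "x \<in> unit_ball_on X \<Longrightarrow> x \<in> X \<and> norm x \<le> 1"
  unfolding unit_ball_on_def by simp

lemma ubI: "x \<in> X \<Longrightarrow> norm x \<le> 1 \<Longrightarrow> x \<in> unit_ball_on X"
  unfolding unit_ball_on_def by simp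

lemma ub_neg: "subspace X \<Longrightarrow> x \<in> unit_ball_on X \<Longrightarrow> -x \<in> unit_ball_on X"
  unfolding unit_ball_on_def by (simp add: subspace_neg)

lemma opbnd_bdd: "opbnd X T \<Longrightarrow> bdd_above ((\<lambda>x. norm (T x)) ` unit_ball_on X)"
  unfolding opbnd_def bdd_above_def by auto

lemma opn_ge: "opbnd X T \<Longrightarrow> x \<in> unit_ball_on X \<Longrightarrow> norm (T x) \<le> op_norm_on X T"
  unfolding op_norm_on_def by (rule cSUP_upper) (auto dest: opbnd_bdd)

lemma opn_le: "subspace X \<Longrightarrow> (\<And>x. x \<in> unit_ball_on X \<Longrightarrow> norm (T x) \<le> b) \<Longrightarrow> op_norm_on X T \<le> b"
  unfolding op_norm_on_def by (rule cSUP_least) (auto dest: ub_zero)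

lemma opn_approx:
  assumes "subspace X" "opbnd X T" "e > 0"
  shows "\<exists>x\<in>unit_ball_on X. norm (T x) > op_norm_on X T - e"
proof -
  have "op_norm_on X T - e < op_norm_on X T" using assms by simp
  then show ?thesis unfolding op_norm_on_def
    using less_cSUP_iff[of "unit_ball_on X" "\<lambda>x. norm (T x)"] ub_zero[OF assms(1)] opbnd_bdd[OF assms(2)]
    by blast
qed

lemma opn_nonneg: "subspace X \<Longrightarrow> opbnd X T \<Longrightarrow> 0 \<le> op_norm_on X T"
proof -
  assume "subspace X" "opbnd X T"
  then have "norm (T 0) \<le> op_norm_on X T" using opn_ge[of X T 0] ub_zero[of X] by blast
  then show ?thesis using norm_ge_zero[of "T 0"] by linarith
qed

lemma bdd_lin_opbnd: "bdd_lin_on X T \<Longrightarrow> opbnd X T"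
  unfolding bdd_lin_on_def opbnd_def unit_ball_on_def
proof (elim conjE exE)
  fix K assume K: "\<forall>x\<in>X. norm (T x) \<le> K * norm x"
  show "\<exists>B. \<forall>x\<in>{x \<in> X. norm x \<le> 1}. norm (T x) \<le> B"
  proof (intro exI[of _ "\<bar>K\<bar>"] ballI)
    fix x assume "x \<in> {x \<in> X. norm x \<le> 1}"
    then have "x \<in> X" "norm x \<le> 1" by auto
    have "K * norm x \<le> \<bar>K\<bar> * norm x" by (intro mult_right_mono) auto
    also have "\<dots> \<le> \<bar>K\<bar> * 1" using \<open>norm x \<le> 1\<close> by (intro mult_left_mono) auto
    finally have "K * norm x \<le> \<bar>K\<bar>" by simp
    then show "norm (T x) \<le> \<bar>K\<bar>" using K \<open>x \<in> X\<close> by force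
  qed
qed

lemma dual_opbnd: "f \<in> dual_on X \<Longrightarrow> opbnd X f"
  unfolding dual_on_def by (simp add: bdd_lin_opbnd)

lemma bl_opbnd: "bounded_linear v \<Longrightarrow> opbnd X v"
  unfolding opbnd_def
proof (intro exI[of _ "onorm v"] ballI)
  fix x assume v: "bounded_linear v" and x: "x \<in> unit_ball_on X"
  have "norm (v x) \<le> onorm v * norm x" using onorm[OF v] .
  also have "\<dots> \<le> onorm v * 1" using ubD[OF x] onorm_pos_le[OF v] by (intro mult_left_mono) auto
  finally show "norm (v x) \<le> onorm v" by simp
qed

lemma lin_on_zero: "lin_on X f \<Longrightarrow> subspace X \<Longrightarrow> f 0 = 0"
proof -
  assume "lin_on X f" "subspace X"
  then have "f (0 *\<^sub>R 0) = 0 *\<^sub>R f 0" unfolding lin_on_def using subspace_0[of X] by blast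
  then show ?thesis by simp
qed

lemma lin_on_neg: "lin_on X f \<Longrightarrow> x \<in> X \<Longrightarrow> f (-x) = - f x"
proof -
  assume "lin_on X f" "x \<in> X"
  then have "f ((-1) *\<^sub>R x) = (-1) *\<^sub>R f x" unfolding lin_on_def by blast
  then show ?thesis by simp
qed

lemma lin_on_add: "lin_on X f \<Longrightarrow> x \<in> X \<Longrightarrow> y \<in> X \<Longrightarrow> f (x + y) = f x + f y"
  unfolding lin_on_def by blast

lemma lin_on_scale: "lin_on X f \<Longrightarrow> x \<in> X \<Longrightarrow> f (c *\<^sub>R x) = c *\<^sub>R f x"
  unfolding lin_on_def by blast

lemma lin_on_sum:
  assumes "subspace X" "lin_on X f" "finite J" "\<And>j. j \<in> J \<Longrightarrow> a j \<in> X"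
  shows "f (\<Sum>j\<in>J. a j) = (\<Sum>j\<in>J. f (a j))"
  using assms(3,4)
proof (induction J rule: finite_induct)
  case empty then show ?case using lin_on_zero[OF assms(2,1)] by simp
next
  case (insert j J)
  have "(\<Sum>j\<in>J. a j) \<in> X" using insert assms(1) by (intro subspace_sum) auto
  then show ?case using insert lin_on_add[OF assms(2)] by simp
qed

lemma opn_bound:
  assumes "subspace X" "lin_on X T" "opbnd X T" "x \<in> X"
  shows "norm (T x) \<le> op_norm_on X T * norm x"
proof (cases "x = 0")
  case True then show ?thesis using lin_on_zero[OF assms(2,1)] by simp
next
  case False
  define u where "u = (1 / norm x) *\<^sub>R x"
  have u: "u \<in> unit_ball_on X" unfolding u_def using assms(1,4) False
    by (intro ubI) (simp_all add: subspace_scale)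
  have "T x = norm x *\<^sub>R T u" unfolding u_def using lin_on_scale[OF assms(2,4)] False by simp
  then have "norm (T x) = norm x * norm (T u)" by simp
  also have "\<dots> \<le> norm x * op_norm_on X T" using opn_ge[OF assms(3) u] by (simp add: mult_left_mono)
  finally show ?thesis by (simp add: mult.commute)
qed

lemma opn_cong: "(\<And>x. x \<in> X \<Longrightarrow> norm (T1 x) = norm (T2 x)) \<Longrightarrow> op_norm_on X T1 = op_norm_on X T2"
  unfolding op_norm_on_def unit_ball_on_def by (rule SUP_cong) auto

lemma opbnd_cong: "(\<And>x. x \<in> X \<Longrightarrow> norm (T1 x) = norm (T2 x)) \<Longrightarrow> opbnd X T2 \<Longrightarrow> opbnd X T1"
  unfolding opbnd_def unit_ball_on_def by auto

lemma opn_scale: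
  assumes "subspace X" "opbnd X T2" "k \<ge> 0" "\<And>x. x \<in> X \<Longrightarrow> norm (T1 x) = k * norm (T2 x)"
  shows "op_norm_on X T1 = k * op_norm_on X T2"
proof (cases "k = 0")
  case True
  have z: "norm (T1 x) \<le> 0" if "x \<in> unit_ball_on X" for x
  proof -
    have "x \<in> X" using ubD[OF that] by simp
    then show ?thesis using assms(4)[of x] True by simp
  qed
  then have "op_norm_on X T1 \<le> 0" by (rule opn_le[OF assms(1)])
  moreover have "opbnd X T1" using z unfolding opbnd_def by blast
  then have "0 \<le> op_norm_on X T1" by (rule opn_nonneg[OF assms(1)])
  ultimately show ?thesis using True by simp
next
  case False
  then have k: "k > 0" using assms(3) by simp
  obtain B where B: "\<forall>x\<in>unit_ball_on X. norm (T2 x) \<le> B" using assms(2) unfolding opbnd_def by blast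
  have "norm (T1 x) \<le> k * B" if x: "x \<in> unit_ball_on X" for x
  proof -
    have "x \<in> X" using ubD[OF x] by simp
    then have "norm (T1 x) = k * norm (T2 x)" using assms(4) by simp
    also have "\<dots> \<le> k * B" using B x k by (intro mult_left_mono) auto
    finally show ?thesis .
  qed
  then have b1: "opbnd X T1" unfolding opbnd_def by blast
  have "op_norm_on X T1 \<le> k * op_norm_on X T2"
  proof (rule opn_le[OF assms(1)])
    fix x assume x: "x \<in> unit_ball_on X"
    have "x \<in> X" using ubD[OF x] by simp
    then have "norm (T1 x) = k * norm (T2 x)" using assms(4) by simp
    also have "\<dots> \<le> k * op_norm_on X T2" using opn_ge[OF assms(2) x] k by (intro mult_left_mono) auto
    finally show "norm (T1 x) \<le> k * op_norm_on X T2" .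
  qed
  moreover have "op_norm_on X T2 \<le> op_norm_on X T1 / k"
  proof (rule opn_le[OF assms(1)])
    fix x assume x: "x \<in> unit_ball_on X"
    have "x \<in> X" using ubD[OF x] by simp
    then have "k * norm (T2 x) \<le> op_norm_on X T1" using opn_ge[OF b1 x] assms(4) by simp
    then show "norm (T2 x) \<le> op_norm_on X T1 / k" using k by (simp add: field_simps)
  qed
  ultimately show ?thesis using k by (simp add: field_simps)
qed

lemma opbnd_add: "opbnd X T1 \<Longrightarrow> opbnd X T2 \<Longrightarrow> opbnd X (\<lambda>x. T1 x + T2 x)"
proof -
  assume "opbnd X T1" "opbnd X T2"
  then obtain B1 B2 where "\<forall>x\<in>unit_ball_on X. norm (T1 x) \<le> B1" "\<forall>x\<in>unit_ball_on X. norm (T2 x) \<le> B2"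
    unfolding opbnd_def by blast
  then have "\<forall>x\<in>unit_ball_on X. norm (T1 x + T2 x) \<le> B1 + B2"
    using norm_triangle_ineq by (smt (verit, best))
  then show ?thesis unfolding opbnd_def by blast
qed

lemma opn_triangle:
  assumes "subspace X" "opbnd X T1" "opbnd X T2"
  shows "op_norm_on X (\<lambda>x. T1 x + T2 x) \<le> op_norm_on X T1 + op_norm_on X T2"
proof (rule opn_le[OF assms(1)])
  fix x assume x: "x \<in> unit_ball_on X"
  show "norm (T1 x + T2 x) \<le> op_norm_on X T1 + op_norm_on X T2"
    using norm_triangle_ineq[of "T1 x" "T2 x"] opn_ge[OF assms(2) x] opn_ge[OF assms(3) x] by linarith
qed

lemma dual_unit_ballD: "v \<in> dual_unit_ball \<Longrightarrow> bounded_linear v \<and> (\<forall>x. \<bar>v x\<bar> \<le> norm x)"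
proof -
  assume "v \<in> dual_unit_ball"
  then have v: "bounded_linear v" "onorm v \<le> 1" unfolding dual_unit_ball_def dual_space_def by auto
  have "\<bar>v x\<bar> \<le> norm x" for x
  proof -
    have "\<bar>v x\<bar> \<le> onorm v * norm x" using onorm[OF v(1), of x] by simp
    also have "\<dots> \<le> 1 * norm x" using v(2) by (intro mult_right_mono) auto
    finally show ?thesis by simp
  qed
  then show ?thesis using v by blast
qed

lemma dual_unit_ballI: "bounded_linear v \<Longrightarrow> (\<And>x. \<bar>v x\<bar> \<le> norm x) \<Longrightarrow> v \<in> dual_unit_ball"
  unfolding dual_unit_ball_def dual_space_def by (auto intro: onorm_bound)

lemma bl_lin_on: "bounded_linear v \<Longrightarrow> lin_on X v"
  unfolding lin_on_def by (simp add: linear_add linear_scale bounded_linear.linear)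

lemma bl_dual: "bounded_linear v \<Longrightarrow> v \<in> dual_on X"
  unfolding dual_on_def bdd_lin_on_def
  using bl_lin_on onorm[of v] by (auto simp: mult.commute)

lemma dual_lin: "f \<in> dual_on X \<Longrightarrow> lin_on X f"
  unfolding dual_on_def bdd_lin_on_def by simp

lemma dual_add: "f \<in> dual_on X \<Longrightarrow> g \<in> dual_on X \<Longrightarrow> (\<lambda>x. f x + g x) \<in> dual_on X"
  unfolding dual_on_def bdd_lin_on_def lin_on_def
proof (clarify, intro conjI)
  fix K L assume K: "\<forall>x\<in>X. norm (f x) \<le> K * norm x" and L: "\<forall>x\<in>X. norm (g x) \<le> L * norm x"
  then show "\<exists>K. \<forall>x\<in>X. norm (f x + g x) \<le> K * norm x"
  proof (intro exI[of _ "K + L"] ballI)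
    fix x assume "x \<in> X"
    then have "norm (f x) \<le> K * norm x" "norm (g x) \<le> L * norm x" using K L by auto
    then show "norm (f x + g x) \<le> (K + L) * norm x"
      using norm_triangle_ineq[of "f x" "g x"] by (simp add: distrib_right)
  qed
qed (auto simp: algebra_simps)

lemma dual_scale: "f \<in> dual_on X \<Longrightarrow> (\<lambda>x. c * f x) \<in> dual_on X"
  unfolding dual_on_def bdd_lin_on_def lin_on_def
proof (clarify, intro conjI)
  fix K assume "\<forall>x\<in>X. norm (f x) \<le> K * norm x"
  then show "\<exists>K. \<forall>x\<in>X. norm (c * f x) \<le> K * norm x"
    by (intro exI[of _ "\<bar>c\<bar> * K"]) (simp add: abs_mult mult.assoc mult_left_mono)
qed (auto simp: algebra_simps)

lemma dual_zero: "(\<lambda>x. 0) \<in> dual_on X"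
  unfolding dual_on_def bdd_lin_on_def lin_on_def by (auto intro: exI[of _ 0])

lemma dual_sum: "finite J \<Longrightarrow> (\<And>j. j \<in> J \<Longrightarrow> f j \<in> dual_on X) \<Longrightarrow> (\<lambda>x. \<Sum>j\<in>J. f j x) \<in> dual_on X"
proof (induction J rule: finite_induct)
  case empty then show ?case using dual_zero by simp
next
  case (insert j J)
  then show ?case using dual_add[of "f j" X "\<lambda>x. \<Sum>j\<in>J. f j x"] by simp
qed

definition Sprop :: "'y::real_normed_vector set \<Rightarrow> bool" where
 "Sprop X \<longleftrightarrow> (\<forall>\<epsilon>>0. \<forall>y. norm y = 1 \<longrightarrow> (\<forall>xs\<in>dual_on X. op_norm_on X xs = 1 \<longrightarrow>
     (\<exists>x\<in>unit_ball_on X. xs x > 1 - \<epsilon> \<and> norm (x + y) > 2 - \<epsilon>)))"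

lemma opbnd_id: "opbnd X (\<lambda>x. x)"
  unfolding opbnd_def using ubD by blast

lemma unit_dual_le1:
  assumes "subspace X" "xs \<in> dual_on X" "op_norm_on X xs = 1" "x \<in> unit_ball_on X"
  shows "\<bar>xs x\<bar> \<le> 1"
  using opn_ge[OF dual_opbnd[OF assms(2)] assms(4)] assms(3) by simp

lemma a_to_S:
  fixes X :: "'y::real_normed_vector set"
  assumes X: "subspace X" and D: "daugavet_pair X"
  shows "Sprop X"
  unfolding Sprop_def
proof (intro allI impI ballI)
  fix \<epsilon> :: real and y :: 'y and xs
  assume e: "\<epsilon> > 0" and y: "norm y = 1" and xs: "xs \<in> dual_on X" and xs1: "op_norm_on X xs = 1"
  define T where "T x = xs x *\<^sub>R y" for x
  have lin: "lin_on X xs" using xs unfolding dual_on_def bdd_lin_on_def by simp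
  obtain K where K: "\<forall>x\<in>X. norm (xs x) \<le> K * norm x" using xs unfolding dual_on_def bdd_lin_on_def by blast
  have bT: "bdd_lin_on X T"
    unfolding bdd_lin_on_def
  proof
    show "lin_on X T" unfolding lin_on_def T_def using lin_on_add[OF lin] lin_on_scale[OF lin]
      by (simp add: scaleR_add_left)
    show "\<exists>K. \<forall>x\<in>X. norm (T x) \<le> K * norm x" unfolding T_def using K y by (intro exI[of _ K]) simp
  qed
  obtain x1 where x1: "x1 \<in> unit_ball_on X" "norm (xs x1) > 1 - 1"
    using opn_approx[OF X dual_opbnd[OF xs], of 1] xs1 by auto
  have x1X: "x1 \<in> X" using ubD[OF x1(1)] by simp
  have "span (T ` X) = span {y}"
  proof
    have "T ` X \<subseteq> span {y}" unfolding T_def by (auto intro: span_scale span_base)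
    then show "span (T ` X) \<subseteq> span {y}" by (simp add: span_minimal)
    have "y = (1 / xs x1) *\<^sub>R T x1" unfolding T_def using x1 by simp
    also have "\<dots> \<in> span (T ` X)" using x1X by (intro span_scale span_base) auto
    finally show "span {y} \<subseteq> span (T ` X)" by (simp add: span_minimal)
  qed
  moreover have "dim (span {y}) = 1"
  proof -
    have "y \<noteq> 0" using y by auto
    then have "independent {y}" by simp
    then show ?thesis using dim_span_eq_card_independent by fastforce
  qed
  ultimately have dimT: "dim (span (T ` X)) = 1" by simp
  have nT: "op_norm_on X T = 1"
    using opn_cong[of X T xs] xs1 y unfolding T_def by simp
  have "op_norm_on X (\<lambda>x. x + T x) = 2" using D bT dimT nT unfolding daugavet_pair_def by simp
  moreover have "opbnd X (\<lambda>x. x + T x)" using opbnd_add[OF opbnd_id bdd_lin_opbnd[OF bT]] .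
  ultimately obtain x where x: "x \<in> unit_ball_on X" "norm (x + T x) > 2 - \<epsilon>/2"
    using opn_approx[OF X, of "\<lambda>x. x + T x" "\<epsilon>/2"] e by auto
  have xX: "x \<in> X" and nx: "norm x \<le> 1" using ubD[OF x(1)] by auto
  have xsle: "\<bar>xs x\<bar> \<le> 1" using unit_dual_le1[OF X xs xs1 x(1)] .
  have "norm (x + T x) \<le> norm x + \<bar>xs x\<bar>" unfolding T_def using norm_triangle_ineq[of x "xs x *\<^sub>R y"] y by simp
  then have big: "\<bar>xs x\<bar> > 1 - \<epsilon>/2" using x(2) nx by linarith
  define x' where "x' = (if xs x \<ge> 0 then x else -x)"
  have x'b: "x' \<in> unit_ball_on X" unfolding x'_def using ub_neg[OF X x(1)] x(1) by simp
  have x'X: "x' \<in> X" using ubD[OF x'b] by simp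
  have xsx': "xs x' = \<bar>xs x\<bar>" unfolding x'_def using lin_on_neg[OF lin xX] by simp
  have nx': "norm (x' + xs x' *\<^sub>R y) = norm (x + T x)"
  proof (cases "xs x \<ge> 0")
    case True then show ?thesis unfolding x'_def T_def by simp
  next
    case False
    then have "x' + xs x' *\<^sub>R y = - (x + T x)" unfolding x'_def T_def using lin_on_neg[OF lin xX] by simp
    then show ?thesis by (metis norm_minus_cancel)
  qed
  have "x' + y = (x' + xs x' *\<^sub>R y) - (xs x' - 1) *\<^sub>R y" by (simp add: algebra_simps)
  then have "norm (x' + y) \<ge> norm (x' + xs x' *\<^sub>R y) - norm ((xs x' - 1) *\<^sub>R y)"
    by (metis norm_triangle_ineq2)
  moreover have "norm ((xs x' - 1) *\<^sub>R y) = 1 - xs x'" using y xsx' xsle by simp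
  ultimately have "norm (x' + y) > 2 - \<epsilon>" using nx' x(2) xsx' big by linarith
  moreover have "xs x' > 1 - \<epsilon>" using xsx' big e by linarith
  ultimately show "\<exists>x\<in>unit_ball_on X. xs x > 1 - \<epsilon> \<and> norm (x + y) > 2 - \<epsilon>" using x'b by blast
qed

lemma bl_comp_dual:
  assumes "bounded_linear \<phi>" "bdd_lin_on X T"
  shows "(\<lambda>x. \<phi> (T x)) \<in> dual_on X"
proof -
  have lT: "lin_on X T" and "\<exists>K. \<forall>x\<in>X. norm (T x) \<le> K * norm x" using assms(2) unfolding bdd_lin_on_def by auto
  then obtain K where K: "\<forall>x\<in>X. norm (T x) \<le> K * norm x" by blast
  have lp: "linear \<phi>" using assms(1) bounded_linear.linear by blast
  have "lin_on X (\<lambda>x. \<phi> (T x))" using lT unfolding lin_on_def by (simp add: linear_add[OF lp] linear_scale[OF lp])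
  moreover have "norm (\<phi> (T x)) \<le> (onorm \<phi> * K) * norm x" if "x \<in> X" for x
  proof -
    have "norm (\<phi> (T x)) \<le> onorm \<phi> * norm (T x)" using onorm[OF assms(1)] .
    also have "\<dots> \<le> onorm \<phi> * (K * norm x)" using K that onorm_pos_le[OF assms(1)] by (intro mult_left_mono) auto
    finally show ?thesis by (simp add: mult.assoc)
  qed
  ultimately show ?thesis unfolding dual_on_def bdd_lin_on_def by blast
qed

lemma ge_by_eps: "(\<And>\<delta>. \<delta> > 0 \<Longrightarrow> a \<ge> b - \<delta>) \<Longrightarrow> a \<ge> (b::real)"
proof (rule ccontr)
  assume h: "\<And>\<delta>. \<delta> > 0 \<Longrightarrow> a \<ge> b - \<delta>" and "\<not> a \<ge> b"
  then have "(b - a) / 2 > 0" by simp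
  from h[OF this] \<open>\<not> a \<ge> b\<close> show False by (simp add: field_simps)
qed

lemma S_to_a:
  fixes X :: "'y::real_normed_vector set"
  assumes X: "subspace X" and S: "Sprop X"
  shows "daugavet_pair X"
  unfolding daugavet_pair_def
proof (intro allI impI, elim conjE)
  fix T :: "'y \<Rightarrow> 'y" assume bT: "bdd_lin_on X T" and dimT: "dim (span (T ` X)) = 1"
  have lT: "lin_on X T" using bT unfolding bdd_lin_on_def by simp
  have oT: "opbnd X T" using bdd_lin_opbnd[OF bT] .
  obtain B where B: "B \<subseteq> span (T ` X)" "independent B" "span (T ` X) \<subseteq> span B" "card B = dim (span (T ` X))"
    using basis_exists by blast
  then obtain w where Bw: "B = {w}" using dimT by (metis card_1_singletonE)
  have w0: "w \<noteq> 0" using B(2) Bw by auto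
  have Tw: "\<exists>c. T x = c *\<^sub>R w" if "x \<in> X" for x
  proof -
    have "T x \<in> span (T ` X)" using that by (intro span_base) auto
    then have "T x \<in> span {w}" using B(3) Bw by auto
    then show ?thesis unfolding span_singleton by auto
  qed
  have wspan: "w \<in> span (T ` X)" using B(1) Bw by auto
  obtain \<phi> where \<phi>: "bounded_linear \<phi>" "\<forall>x. \<bar>\<phi> x\<bar> \<le> norm x" "\<phi> w = norm w"
    using hahn_banach_norming[of w] by blast
  have lp: "linear \<phi>" using \<phi>(1) bounded_linear.linear by blast
  define f where "f x = (1 / norm w) * \<phi> (T x)" for x
  have fd: "f \<in> dual_on X" unfolding f_def using dual_scale[OF bl_comp_dual[OF \<phi>(1) bT]] .
  have Tf: "T x = f x *\<^sub>R w" if xX: "x \<in> X" for x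
  proof -
    obtain c where c: "T x = c *\<^sub>R w" using Tw[OF xX] by blast
    then have "\<phi> (T x) = c * norm w" using linear_scale[OF lp] \<phi>(3) by simp
    then have "f x = c" unfolding f_def using w0 by simp
    then show ?thesis using c by simp
  qed
  have nTf: "norm (T x) = norm w * norm (f x)" if "x \<in> X" for x using Tf[OF that] by (simp add: mult.commute)
  have of: "opbnd X f" using dual_opbnd[OF fd] .
  define c where "c = op_norm_on X T"
  have cf: "c = norm w * op_norm_on X f" unfolding c_def using opn_scale[OF X of _ nTf] by simp
  have c0: "c \<ge> 0" unfolding c_def using opn_nonneg[OF X oT] .
  have "\<exists>x\<in>X. T x \<noteq> 0"
  proof (rule ccontr)
    assume "\<not> (\<exists>x\<in>X. T x \<noteq> 0)"
    then have "T ` X \<subseteq> span {0}" by (auto intro: span_base)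
    then have "span (T ` X) \<subseteq> span {0}" by (simp add: span_minimal)
    then have "w \<in> span {0}" using wspan by auto
    then show False using w0 unfolding span_singleton by auto
  qed
  then obtain x0 where x0: "x0 \<in> X" "T x0 \<noteq> 0" by blast
  have fx0: "f x0 \<noteq> 0" using Tf[OF x0(1)] x0(2) by auto
  have x00: "x0 \<noteq> 0" using fx0 lin_on_zero[OF dual_lin[OF fd] X] by auto
  have "norm (f x0) \<le> op_norm_on X f * norm x0" using opn_bound[OF X dual_lin[OF fd] of x0(1)] .
  then have nf: "op_norm_on X f > 0"
  proof -
    assume h: "norm (f x0) \<le> op_norm_on X f * norm x0"
    show ?thesis
    proof (rule ccontr)
      assume "\<not> op_norm_on X f > 0"
      then have "op_norm_on X f * norm x0 \<le> 0" by (simp add: mult_nonpos_nonneg)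
      then show False using h fx0 by simp
    qed
  qed
  define g where "g x = (1 / op_norm_on X f) * f x" for x
  have gd: "g \<in> dual_on X" unfolding g_def using dual_scale[OF fd] .
  have g1: "op_norm_on X g = 1"
    using opn_scale[OF X of, of "1 / op_norm_on X f" g] nf unfolding g_def by (simp add: abs_mult)
  define y where "y = (1 / norm w) *\<^sub>R w"
  have y1: "norm y = 1" unfolding y_def using w0 by simp
  have Tg: "T x = (c * g x) *\<^sub>R y" if "x \<in> X" for x
    unfolding g_def y_def cf using Tf[OF that] nf w0 by simp
  have oJT: "opbnd X (\<lambda>x. x + T x)" using opbnd_add[OF opbnd_id oT] .
  show "op_norm_on X (\<lambda>x. x + T x) = 1 + op_norm_on X T"
  proof (rule antisym)
    show "op_norm_on X (\<lambda>x. x + T x) \<le> 1 + op_norm_on X T"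
    proof (rule opn_le[OF X])
      fix x assume x: "x \<in> unit_ball_on X"
      show "norm (x + T x) \<le> 1 + op_norm_on X T"
        using norm_triangle_ineq[of x "T x"] opn_ge[OF oT x] ubD[OF x] by linarith
    qed
  next
    show "1 + op_norm_on X T \<le> op_norm_on X (\<lambda>x. x + T x)"
    proof (rule ge_by_eps)
      fix \<delta> :: real assume d: "\<delta> > 0"
      define \<epsilon> where "\<epsilon> = \<delta> / (2 * c + 2)"
      have e: "\<epsilon> > 0" unfolding \<epsilon>_def using d c0 by simp
      have ee: "(2 * c + 1) * \<epsilon> < \<delta>" unfolding \<epsilon>_def using d c0 by (simp add: field_simps)
      obtain x where x: "x \<in> unit_ball_on X" "g x > 1 - \<epsilon>" "norm (x + y) > 2 - \<epsilon>"
        using S e y1 gd g1 unfolding Sprop_def by blast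
      have xX: "x \<in> X" and nx: "norm x \<le> 1" using ubD[OF x(1)] by auto
      have gle: "g x \<le> 1" using unit_dual_le1[OF X gd g1 x(1)] by simp
      have A: "norm (x + c *\<^sub>R y) \<ge> 1 + c - (c + 1) * \<epsilon>"
      proof (cases "c \<ge> 1")
        case True
        have "c *\<^sub>R (x + y) = (x + c *\<^sub>R y) + (c - 1) *\<^sub>R x" by (simp add: algebra_simps)
        then have "norm (c *\<^sub>R (x + y)) \<le> norm (x + c *\<^sub>R y) + norm ((c - 1) *\<^sub>R x)"
          by (metis norm_triangle_ineq)
        moreover have "norm (c *\<^sub>R (x + y)) = c * norm (x + y)" using c0 by simp
        moreover have "norm ((c - 1) *\<^sub>R x) \<le> c - 1" using True nx
          by (simp add: mult_left_le)
        moreover have "c * norm (x + y) \<ge> c * (2 - \<epsilon>)" using x(3) c0 by (intro mult_left_mono) auto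
        moreover have "c * (2 - \<epsilon>) = 2 * c - c * \<epsilon>" "(c + 1) * \<epsilon> = c * \<epsilon> + \<epsilon>" by (simp_all add: algebra_simps)
        ultimately show ?thesis using e by linarith
      next
        case False
        have "x + y = (x + c *\<^sub>R y) + (1 - c) *\<^sub>R y" by (simp add: algebra_simps)
        then have "norm (x + y) \<le> norm (x + c *\<^sub>R y) + norm ((1 - c) *\<^sub>R y)"
          by (metis norm_triangle_ineq)
        moreover have "norm ((1 - c) *\<^sub>R y) = 1 - c" using False y1 by simp
        moreover have "(c + 1) * \<epsilon> = c * \<epsilon> + \<epsilon>" "c * \<epsilon> \<ge> 0" using c0 e by (simp_all add: algebra_simps)
        ultimately show ?thesis using x(3) by linarith
      qed
      have "x + c *\<^sub>R y = (x + T x) + (c * (1 - g x)) *\<^sub>R y" using Tg[OF xX] by (simp add: algebra_simps)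
      then have "norm (x + c *\<^sub>R y) \<le> norm (x + T x) + norm ((c * (1 - g x)) *\<^sub>R y)"
        by (metis norm_triangle_ineq)
      moreover have "norm ((c * (1 - g x)) *\<^sub>R y) = c * (1 - g x)" using y1 gle c0 by simp
      moreover have "c * (1 - g x) \<le> c * \<epsilon>" using x(2) c0 by (intro mult_left_mono) auto
      ultimately have "norm (x + T x) \<ge> 1 + c - (2 * c + 1) * \<epsilon>" using A by (simp add: algebra_simps)
      moreover have "norm (x + T x) \<le> op_norm_on X (\<lambda>x. x + T x)" using opn_ge[OF oJT x(1)] .
      ultimately show "op_norm_on X (\<lambda>x. x + T x) \<ge> 1 + op_norm_on X T - \<delta>"
        using ee unfolding c_def by linarith
    qed
  qed
qed

definition Sdprop :: "'y::real_normed_vector set \<Rightarrow> bool" where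
 "Sdprop X \<longleftrightarrow> (\<forall>\<epsilon>>0. \<forall>y. norm y = 1 \<longrightarrow> (\<forall>xs\<in>dual_on X. op_norm_on X xs = 1 \<longrightarrow>
     (\<exists>v\<in>dual_unit_ball. v y > 1 - \<epsilon> \<and> op_norm_on X (\<lambda>x. v x + xs x) > 2 - \<epsilon>)))"

lemma bl_lin: "bounded_linear v \<Longrightarrow> v (x + y) = v x + v y" "bounded_linear v \<Longrightarrow> v (c *\<^sub>R x) = c * v x"
  "bounded_linear v \<Longrightarrow> v (- x) = - v x"
  using bounded_linear.linear linear_add linear_scale linear_neg by fastforce+

lemma S_to_Sd:
  fixes X :: "'y::real_normed_vector set"
  assumes X: "subspace X" and S: "Sprop X"
  shows "Sdprop X"
  unfolding Sdprop_def
proof (intro allI impI ballI)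
  fix \<epsilon> :: real and y :: 'y and xs
  assume e: "\<epsilon> > 0" and y: "norm y = 1" and xs: "xs \<in> dual_on X" and xs1: "op_norm_on X xs = 1"
  obtain x where x: "x \<in> unit_ball_on X" "xs x > 1 - \<epsilon>/2" "norm (x + y) > 2 - \<epsilon>/2"
    using S e y xs xs1 unfolding Sprop_def by (meson half_gt_zero)
  obtain \<phi> where \<phi>: "bounded_linear \<phi>" "\<forall>x. \<bar>\<phi> x\<bar> \<le> norm x" "\<phi> (x + y) = norm (x + y)"
    using hahn_banach_norming[of "x + y"] by blast
  have vb: "\<phi> \<in> dual_unit_ball" using dual_unit_ballI[OF \<phi>(1)] \<phi>(2) by blast
  have s: "\<phi> x + \<phi> y = norm (x + y)" using \<phi>(3) bl_lin(1)[OF \<phi>(1)] by simp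
  have "\<phi> x \<le> 1" using \<phi>(2) ubD[OF x(1)] by (metis abs_le_D1 order_trans)
  moreover have "\<phi> y \<le> 1" using \<phi>(2) y by (metis abs_le_D1)
  ultimately have py: "\<phi> y > 1 - \<epsilon>" and px: "\<phi> x > 1 - \<epsilon>/2" using s x(3) e by linarith+
  have ob: "opbnd X (\<lambda>x. \<phi> x + xs x)" using opbnd_add[OF bl_opbnd[OF \<phi>(1)] dual_opbnd[OF xs]] .
  have "\<bar>\<phi> x + xs x\<bar> \<le> op_norm_on X (\<lambda>x. \<phi> x + xs x)" using opn_ge[OF ob x(1)] by simp
  then have "op_norm_on X (\<lambda>x. \<phi> x + xs x) > 2 - \<epsilon>" using px x(2) by linarith
  then show "\<exists>v\<in>dual_unit_ball. v y > 1 - \<epsilon> \<and> op_norm_on X (\<lambda>x. v x + xs x) > 2 - \<epsilon>"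
    using vb py by blast
qed

lemma Sd_to_S:
  fixes X :: "'y::real_normed_vector set"
  assumes X: "subspace X" and S: "Sdprop X"
  shows "Sprop X"
  unfolding Sprop_def
proof (intro allI impI ballI)
  fix \<epsilon> :: real and y :: 'y and xs
  assume e: "\<epsilon> > 0" and y: "norm y = 1" and xs: "xs \<in> dual_on X" and xs1: "op_norm_on X xs = 1"
  have e4: "\<epsilon>/4 > 0" using e by simp
  obtain v where v: "v \<in> dual_unit_ball" "v y > 1 - \<epsilon>/4" "op_norm_on X (\<lambda>x. v x + xs x) > 2 - \<epsilon>/4"
    using S e4 y xs xs1 unfolding Sdprop_def by blast
  have vb: "bounded_linear v" "\<forall>x. \<bar>v x\<bar> \<le> norm x" using dual_unit_ballD[OF v(1)] by auto
  have ob: "opbnd X (\<lambda>x. v x + xs x)" using opbnd_add[OF bl_opbnd[OF vb(1)] dual_opbnd[OF xs]] .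
  obtain x where x: "x \<in> unit_ball_on X" "norm (v x + xs x) > op_norm_on X (\<lambda>x. v x + xs x) - \<epsilon>/4"
    using opn_approx[OF X ob e4] by blast
  have xX: "x \<in> X" and nx: "norm x \<le> 1" using ubD[OF x(1)] by auto
  define x' where "x' = (if v x + xs x \<ge> 0 then x else -x)"
  have x'b: "x' \<in> unit_ball_on X" unfolding x'_def using ub_neg[OF X x(1)] x(1) by simp
  have sx': "v x' + xs x' = \<bar>v x + xs x\<bar>"
    unfolding x'_def using lin_on_neg[OF dual_lin[OF xs] xX] bl_lin(3)[OF vb(1)] by simp
  have "\<bar>v x'\<bar> \<le> 1" using vb(2) ubD[OF x'b] by (metis order_trans)
  moreover have "\<bar>xs x'\<bar> \<le> 1" using unit_dual_le1[OF X xs xs1 x'b] .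
  moreover have "\<bar>v x + xs x\<bar> > 2 - \<epsilon>/2" using x(2) v(3) by simp
  ultimately have a: "v x' > 1 - \<epsilon>/2" and b: "xs x' > 1 - \<epsilon>/2" using sx' by linarith+
  have "v (x' + y) \<le> norm (x' + y)" using vb(2) by (metis abs_le_D1)
  then have "norm (x' + y) > 2 - \<epsilon>" using bl_lin(1)[OF vb(1)] a v(2) e by simp
  then show "\<exists>x\<in>unit_ball_on X. xs x > 1 - \<epsilon> \<and> norm (x + y) > 2 - \<epsilon>"
    using x'b b e by (intro bexI[of _ x']) auto
qed

lemma weak_open_basic:
  "f \<in> dual_on X \<Longrightarrow> open W \<Longrightarrow> openin (weak_top X) {x\<in>X. f x \<in> W}"
  unfolding weak_top_def openin_topology_generated_by_iff
  by (rule generate_topology_on.Basis) blast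

lemma weak_star_open_basic:
  "open W \<Longrightarrow> openin weak_star_top {v\<in>dual_space. v y \<in> W}"
  unfolding weak_star_top_def openin_topology_generated_by_iff
  by (rule generate_topology_on.Basis) blast

lemma ball_sub_open: "open W \<Longrightarrow> (a::real) \<in> W \<Longrightarrow> \<exists>e>0. \<forall>b. \<bar>b - a\<bar> < e \<longrightarrow> b \<in> W"
  unfolding open_dist dist_real_def by blast

definition wnb :: "'a::real_normed_vector set \<Rightarrow> 'a \<Rightarrow> 'a set \<Rightarrow> bool" where
  "wnb X x0 U \<longleftrightarrow> (\<exists>I \<delta>. finite I \<and> I \<subseteq> dual_on X \<and> \<delta> > 0 \<and> {x\<in>X. \<forall>f\<in>I. \<bar>f x - f x0\<bar> < \<delta>} \<subseteq> U)"

lemma wnb_mono: "wnb X x0 A \<Longrightarrow> A \<subseteq> B \<Longrightarrow> wnb X x0 B"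
  unfolding wnb_def by (meson order_trans)

lemma wnb_Int:
  assumes "wnb X x0 A" "wnb X x0 B" shows "wnb X x0 (A \<inter> B)"
proof -
  obtain I1 d1 where 1: "finite I1" "I1 \<subseteq> dual_on X" "d1 > 0" "{x\<in>X. \<forall>f\<in>I1. \<bar>f x - f x0\<bar> < d1} \<subseteq> A"
    using assms(1) unfolding wnb_def by blast
  obtain I2 d2 where 2: "finite I2" "I2 \<subseteq> dual_on X" "d2 > 0" "{x\<in>X. \<forall>f\<in>I2. \<bar>f x - f x0\<bar> < d2} \<subseteq> B"
    using assms(2) unfolding wnb_def by blast
  have "{x\<in>X. \<forall>f\<in>I1 \<union> I2. \<bar>f x - f x0\<bar> < min d1 d2} \<subseteq> A \<inter> B"
  proof
    fix x assume "x \<in> {x\<in>X. \<forall>f\<in>I1 \<union> I2. \<bar>f x - f x0\<bar> < min d1 d2}"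
    then have "x \<in> X" "\<forall>f\<in>I1. \<bar>f x - f x0\<bar> < d1" "\<forall>f\<in>I2. \<bar>f x - f x0\<bar> < d2" by auto
    then show "x \<in> A \<inter> B" using 1(4) 2(4) by blast
  qed
  then show ?thesis unfolding wnb_def using 1 2 by (intro exI[of _ "I1 \<union> I2"] exI[of _ "min d1 d2"]) simp
qed

lemma wnb_basic:
  assumes "f \<in> dual_on X" "open W" "x0 \<in> X" "f x0 \<in> W"
  shows "wnb X x0 {x\<in>X. f x \<in> W}"
proof -
  obtain e where e: "e > 0" "\<forall>b. \<bar>b - f x0\<bar> < e \<longrightarrow> b \<in> W" using ball_sub_open[OF assms(2,4)] by blast
  have "{x\<in>X. \<forall>g\<in>{f}. \<bar>g x - g x0\<bar> < e} \<subseteq> {x\<in>X. f x \<in> W}" using e by auto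
  then show ?thesis unfolding wnb_def using assms(1) e(1) by (intro exI[of _ "{f}"] exI[of _ e]) simp
qed

lemma weak_nbhd:
  assumes "openin (weak_top X) U" "x0 \<in> U"
  shows "wnb X x0 U"
proof -
  have g: "generate_topology_on {{x\<in>X. f x \<in> W} | f W. f \<in> dual_on X \<and> open W} U"
    using assms(1) unfolding weak_top_def openin_topology_generated_by_iff .
  have "\<forall>x0\<in>U. wnb X x0 U"
    using g
  proof (induction rule: generate_topology_on.induct)
    case Empty then show ?case by simp
  next
    case (Int a b)
    then show ?case using wnb_Int by blast
  next
    case (UN K)
    show ?case
    proof
      fix x0 assume "x0 \<in> \<Union>K"
      then obtain k where k: "k \<in> K" "x0 \<in> k" by blast
      then have "wnb X x0 k" using UN.IH by blast
      then show "wnb X x0 (\<Union>K)" using wnb_mono k by blast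
    qed
  next
    case (Basis s)
    then obtain f W where s: "s = {x\<in>X. f x \<in> W}" "f \<in> dual_on X" "open W" by blast
    then show ?case using wnb_basic by blast
  qed
  then show ?thesis using assms(2) by blast
qed

definition wsnb :: "('a::real_normed_vector \<Rightarrow> real) \<Rightarrow> ('a \<Rightarrow> real) set \<Rightarrow> bool" where
  "wsnb v0 U \<longleftrightarrow> (\<exists>I \<delta>. finite I \<and> \<delta> > 0 \<and> {v\<in>dual_space. \<forall>y\<in>I. \<bar>v y - v0 y\<bar> < \<delta>} \<subseteq> U)"

lemma wsnb_mono: "wsnb v0 A \<Longrightarrow> A \<subseteq> B \<Longrightarrow> wsnb v0 B"
  unfolding wsnb_def by (meson order_trans)

lemma wsnb_Int:
  assumes "wsnb v0 A" "wsnb v0 B" shows "wsnb v0 (A \<inter> B)"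
proof -
  obtain I1 d1 where 1: "finite I1" "d1 > 0" "{v\<in>dual_space. \<forall>y\<in>I1. \<bar>v y - v0 y\<bar> < d1} \<subseteq> A"
    using assms(1) unfolding wsnb_def by blast
  obtain I2 d2 where 2: "finite I2" "d2 > 0" "{v\<in>dual_space. \<forall>y\<in>I2. \<bar>v y - v0 y\<bar> < d2} \<subseteq> B"
    using assms(2) unfolding wsnb_def by blast
  have "{v\<in>dual_space. \<forall>y\<in>I1 \<union> I2. \<bar>v y - v0 y\<bar> < min d1 d2} \<subseteq> A \<inter> B"
  proof
    fix v assume "v \<in> {v\<in>dual_space. \<forall>y\<in>I1 \<union> I2. \<bar>v y - v0 y\<bar> < min d1 d2}"
    then have "v \<in> dual_space" "\<forall>y\<in>I1. \<bar>v y - v0 y\<bar> < d1" "\<forall>y\<in>I2. \<bar>v y - v0 y\<bar> < d2" by auto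
    then show "v \<in> A \<inter> B" using 1(3) 2(3) by blast
  qed
  then show ?thesis unfolding wsnb_def using 1 2 by (intro exI[of _ "I1 \<union> I2"] exI[of _ "min d1 d2"]) simp
qed

lemma wsnb_basic:
  assumes "open W" "v0 \<in> dual_space" "v0 y \<in> W"
  shows "wsnb v0 {v\<in>dual_space. v y \<in> W}"
proof -
  obtain e where e: "e > 0" "\<forall>b. \<bar>b - v0 y\<bar> < e \<longrightarrow> b \<in> W" using ball_sub_open[OF assms(1,3)] by blast
  have "{v\<in>dual_space. \<forall>z\<in>{y}. \<bar>v z - v0 z\<bar> < e} \<subseteq> {v\<in>dual_space. v y \<in> W}" using e by auto
  then show ?thesis unfolding wsnb_def using e(1) by (intro exI[of _ "{y}"] exI[of _ e]) simp
qed

lemma weak_star_nbhd: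
  assumes "openin weak_star_top U" "v0 \<in> U"
  shows "wsnb v0 U"
proof -
  have g: "generate_topology_on {{v\<in>dual_space. v y \<in> W} | y W. open W} U"
    using assms(1) unfolding weak_star_top_def openin_topology_generated_by_iff .
  have "\<forall>v0\<in>U. wsnb v0 U"
    using g
  proof (induction rule: generate_topology_on.induct)
    case Empty then show ?case by simp
  next
    case (Int a b)
    then show ?case using wsnb_Int by blast
  next
    case (UN K)
    show ?case
    proof
      fix v0 assume "v0 \<in> \<Union>K"
      then obtain k where k: "k \<in> K" "v0 \<in> k" by blast
      then have "wsnb v0 k" using UN.IH by blast
      then show "wsnb v0 (\<Union>K)" using wsnb_mono k by blast
    qed
  next
    case (Basis s)
    then obtain y W where s: "s = {v\<in>dual_space. v y \<in> W}" "open W" by blast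
    then show ?case using wsnb_basic by blast
  qed
  then show ?thesis using assms(2) by blast
qed

lemma sq_expand3:
  fixes p q z :: "'i \<Rightarrow> real"
  shows "(\<Sum>i\<in>I. (p i - q i)^2) = (\<Sum>i\<in>I. (p i - z i)^2) - 2 * (\<Sum>i\<in>I. (q i - z i) * p i) + 2 * (\<Sum>i\<in>I. (q i - z i) * z i) + (\<Sum>i\<in>I. (q i - z i)^2)"
proof -
  have "(\<Sum>i\<in>I. (p i - q i)^2) = (\<Sum>i\<in>I. ((p i - z i)^2 - 2 * ((q i - z i) * p i) + 2 * ((q i - z i) * z i)) + (q i - z i)^2)"
    by (rule sum.cong) (simp_all add: power2_eq_square algebra_simps)
  also have "\<dots> = (\<Sum>i\<in>I. (p i - z i)^2) - 2 * (\<Sum>i\<in>I. (q i - z i) * p i) + 2 * (\<Sum>i\<in>I. (q i - z i) * z i) + (\<Sum>i\<in>I. (q i - z i)^2)"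
    by (simp add: sum.distrib sum_subtractf sum_distrib_left)
  finally show ?thesis .
qed

lemma sq_self:
  fixes q z :: "'i \<Rightarrow> real"
  shows "(\<Sum>i\<in>I. (q i - z i)^2) = (\<Sum>i\<in>I. (q i - z i) * q i) - (\<Sum>i\<in>I. (q i - z i) * z i)"
proof -
  have "(\<Sum>i\<in>I. (q i - z i)^2) = (\<Sum>i\<in>I. (q i - z i) * q i - (q i - z i) * z i)"
    by (rule sum.cong) (simp_all add: power2_eq_square algebra_simps)
  then show ?thesis by (simp add: sum_subtractf)
qed

lemma term_le_sum_sq:
  fixes u :: "'i \<Rightarrow> real"
  assumes "finite I" "i \<in> I"
  shows "(u i)^2 \<le> (\<Sum>j\<in>I. (u j)^2)"
  using member_le_sum[of i I "\<lambda>j. (u j)^2"] assms by simp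

lemma abs_lt_of_sq: "(x::real)^2 < r^2 \<Longrightarrow> r \<ge> 0 \<Longrightarrow> \<bar>x\<bar> < r"
  by (simp add: abs_less_iff power2_less_imp_less abs_square_less_1 real_sqrt_less_iff)

lemma sum_sq_le_card:
  fixes u :: "'i \<Rightarrow> real"
  assumes "finite I" "\<And>i. i \<in> I \<Longrightarrow> \<bar>u i\<bar> \<le> B"
  shows "(\<Sum>i\<in>I. (u i)^2) \<le> real (card I) * B^2"
proof -
  have "(\<Sum>i\<in>I. (u i)^2) \<le> (\<Sum>i\<in>I. B^2)"
  proof (rule sum_mono)
    fix i assume "i \<in> I"
    then have "\<bar>u i\<bar> \<le> B" by (rule assms(2))
    then have "\<bar>u i\<bar>^2 \<le> B^2" by (intro power_mono) auto
    then show "(u i)^2 \<le> B^2" by simp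
  qed
  then show ?thesis by simp
qed

lemma slice_lemma:
  fixes \<phi> :: "'i \<Rightarrow> 'a \<Rightarrow> real" and cen :: "'i \<Rightarrow> real"
  assumes fin: "finite I" and bnd: "\<forall>i\<in>I. \<forall>k\<in>K. \<bar>\<phi> i k\<bar> \<le> M" and K: "K \<noteq> {}" and \<alpha>: "\<alpha> > 0"
  shows "\<exists>r c t. r \<in> K \<and> (\<Sum>i\<in>I. c i * \<phi> i r) > t
     \<and> (\<forall>k\<in>K. (\<Sum>i\<in>I. c i * \<phi> i k) > t \<longrightarrow> (\<Sum>i\<in>I. (\<phi> i k - \<phi> i r)^2) < 3 * \<alpha>)
     \<and> (\<forall>k\<in>K. (\<Sum>i\<in>I. (\<phi> i k - cen i)^2) < (\<Sum>i\<in>I. (\<phi> i r - cen i)^2) + \<alpha>)"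
proof -
  define F where "F k = (\<Sum>i\<in>I. (\<phi> i k - cen i)^2)" for k
  have Fb: "F k \<le> (\<Sum>i\<in>I. (M + \<bar>cen i\<bar>)^2)" if k: "k \<in> K" for k
    unfolding F_def
  proof (rule sum_mono)
    fix i assume i: "i \<in> I"
    have "\<bar>\<phi> i k - cen i\<bar> \<le> M + \<bar>cen i\<bar>" using bnd i k by (smt (verit))
    then have "\<bar>\<phi> i k - cen i\<bar>^2 \<le> (M + \<bar>cen i\<bar>)^2" by (intro power_mono) auto
    then show "(\<phi> i k - cen i)^2 \<le> (M + \<bar>cen i\<bar>)^2" by simp
  qed
  have bdd: "bdd_above (F ` K)" using Fb by (intro bdd_aboveI[where M="\<Sum>i\<in>I. (M + \<bar>cen i\<bar>)^2"]) auto
  have "(SUP k\<in>K. F k) - \<alpha> < (SUP k\<in>K. F k)" using \<alpha> by simp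
  then obtain r where r: "r \<in> K" "F r > (SUP k\<in>K. F k) - \<alpha>"
    using less_cSUP_iff[OF K bdd] by blast
  have Fle: "F k \<le> (SUP k\<in>K. F k)" if "k \<in> K" for k using cSUP_upper[OF that bdd] .
  define c where "c i = \<phi> i r - cen i" for i
  define t where "t = (\<Sum>i\<in>I. c i * \<phi> i r) - \<alpha>"
  have far: "\<forall>k\<in>K. F k < F r + \<alpha>" using Fle r by force
  have Fr: "F r = (\<Sum>i\<in>I. c i * \<phi> i r) - (\<Sum>i\<in>I. c i * cen i)"
    unfolding F_def c_def by (rule sq_self)
  have rad: "(\<Sum>i\<in>I. (\<phi> i k - \<phi> i r)^2) < 3 * \<alpha>" if k: "k \<in> K" and sl: "(\<Sum>i\<in>I. c i * \<phi> i k) > t" for k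
  proof -
    have "(\<Sum>i\<in>I. (\<phi> i k - \<phi> i r)^2) = F k - 2 * (\<Sum>i\<in>I. c i * \<phi> i k) + 2 * (\<Sum>i\<in>I. c i * cen i) + F r"
      unfolding F_def c_def by (rule sq_expand3)
    then show ?thesis using sl Fr far k unfolding t_def by force
  qed
  have tr: "t < (\<Sum>i\<in>I. c i * \<phi> i r)" unfolding t_def using \<alpha> by simp
  show ?thesis
    using r(1) rad far tr unfolding F_def
    by (intro exI[of _ r] exI[of _ c] exI[of _ t]) blast
qed

definition GInv :: "'i set \<Rightarrow> ('i \<Rightarrow> 'a \<Rightarrow> real) \<Rightarrow> 'a set \<Rightarrow> real \<Rightarrow> nat \<Rightarrow> (nat \<Rightarrow> real) \<Rightarrow> (nat \<Rightarrow> 'i \<Rightarrow> real) \<Rightarrow> (nat \<Rightarrow> real) \<Rightarrow> (nat \<Rightarrow> 'a) \<Rightarrow> bool" where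
 "GInv I \<phi> K \<rho> m lam c t r \<longleftrightarrow> (\<forall>j<m. lam j \<ge> 0) \<and> (\<Sum>j<m. lam j) = 1 \<and>
    (\<forall>j<m. r j \<in> K \<and> (\<Sum>i\<in>I. c j i * \<phi> i (r j)) > t j \<and>
      (\<forall>k\<in>K. (\<Sum>i\<in>I. c j i * \<phi> i k) > t j \<longrightarrow> (\<Sum>i\<in>I. (\<phi> i k - \<phi> i (r j))^2) < \<rho>^2))"

definition comb :: "('i \<Rightarrow> 'a \<Rightarrow> real) \<Rightarrow> nat \<Rightarrow> (nat \<Rightarrow> real) \<Rightarrow> (nat \<Rightarrow> 'a) \<Rightarrow> 'i \<Rightarrow> real" where
 "comb \<phi> m lam r i = (\<Sum>j<m. lam j * \<phi> i (r j))"

definition Err :: "'i set \<Rightarrow> ('i \<Rightarrow> 'a \<Rightarrow> real) \<Rightarrow> 'a \<Rightarrow> nat \<Rightarrow> (nat \<Rightarrow> real) \<Rightarrow> (nat \<Rightarrow> 'a) \<Rightarrow> real" where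
 "Err I \<phi> x0 m lam r = (\<Sum>i\<in>I. (\<phi> i x0 - comb \<phi> m lam r i)^2)"

lemma comb_bound:
  assumes inv: "GInv I \<phi> K \<rho> m lam c t r" and bnd: "\<forall>i\<in>I. \<forall>k\<in>K. \<bar>\<phi> i k\<bar> \<le> M" and i: "i \<in> I"
  shows "\<bar>comb \<phi> m lam r i\<bar> \<le> M"
proof -
  have "\<bar>comb \<phi> m lam r i\<bar> \<le> (\<Sum>j<m. \<bar>lam j * \<phi> i (r j)\<bar>)" unfolding comb_def by (rule sum_abs)
  also have "\<dots> \<le> (\<Sum>j<m. lam j * M)"
  proof (rule sum_mono)
    fix j assume "j \<in> {..<m}"
    then have "lam j \<ge> 0" "r j \<in> K" using inv unfolding GInv_def by auto
    then show "\<bar>lam j * \<phi> i (r j)\<bar> \<le> lam j * M" using bnd i by (simp add: abs_mult mult_left_mono)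
  qed
  also have "\<dots> = M" using inv unfolding GInv_def by (simp add: sum_distrib_right[symmetric])
  finally show ?thesis .
qed

lemma greedy_step:
  fixes \<phi> :: "'i \<Rightarrow> 'a \<Rightarrow> real"
  assumes fin: "finite I" and bnd: "\<forall>i\<in>I. \<forall>k\<in>K. \<bar>\<phi> i k\<bar> \<le> M" and x0: "x0 \<in> K" and \<rho>: "\<rho> > 0"
    and inv: "GInv I \<phi> K \<rho> m lam c t r" and big: "Err I \<phi> x0 m lam r \<ge> \<rho>^2"
  shows "\<exists>lam' c' t' r'. GInv I \<phi> K \<rho> (Suc m) lam' c' t' r' \<and>
     Err I \<phi> x0 (Suc m) lam' r' \<le> Err I \<phi> x0 m lam r - \<rho>^4 / (4 * (real (card I) * (2*M)^2))"
proof -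
  define D2 where "D2 = real (card I) * (2*M)^2"
  define a where "a i = comb \<phi> m lam r i" for i
  define e where "e i = \<phi> i x0 - a i" for i
  define E where "E = Err I \<phi> x0 m lam r"
  have Ee: "E = (\<Sum>i\<in>I. (e i)^2)" unfolding E_def Err_def e_def a_def ..
  have aM: "\<bar>a i\<bar> \<le> M" if "i \<in> I" for i unfolding a_def using comb_bound[OF inv bnd that] .
  have dist: "(\<Sum>i\<in>I. (\<phi> i k - a i)^2) \<le> D2" if k: "k \<in> K" for k
    unfolding D2_def
  proof (rule sum_sq_le_card[OF fin])
    fix i assume i: "i \<in> I"
    show "\<bar>\<phi> i k - a i\<bar> \<le> 2 * M" using aM[OF i] bnd i k by (smt (verit))
  qed
  have ED: "E \<le> D2" using dist[OF x0] unfolding Ee e_def .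
  have Epos: "E \<ge> \<rho>^2" using big unfolding E_def .
  have E0: "E > 0" using Epos \<rho> by (smt (verit) zero_less_power)
  have D0: "D2 > 0" using ED E0 by simp
  define \<alpha> where "\<alpha> = \<rho>^2 / 3"
  have \<alpha>0: "\<alpha> > 0" unfolding \<alpha>_def using \<rho> by simp
  define R where "R = (\<alpha> + D2) / E"
  have R0: "R > 0" unfolding R_def using \<alpha>0 D0 E0 by simp
  have RE: "R * E = \<alpha> + D2" unfolding R_def using E0 by simp
  define cen where "cen i = a i - R * e i" for i
  obtain r0 cn tn where r0: "r0 \<in> K" "(\<Sum>i\<in>I. cn i * \<phi> i r0) > tn"
    and rad: "\<forall>k\<in>K. (\<Sum>i\<in>I. cn i * \<phi> i k) > tn \<longrightarrow> (\<Sum>i\<in>I. (\<phi> i k - \<phi> i r0)^2) < 3 * \<alpha>"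
    and far: "\<forall>k\<in>K. (\<Sum>i\<in>I. (\<phi> i k - cen i)^2) < (\<Sum>i\<in>I. (\<phi> i r0 - cen i)^2) + \<alpha>"
    using slice_lemma[OF fin bnd _ \<alpha>0, of cen] x0 by blast
  define d where "d i = \<phi> i r0 - a i" for i
  define S where "S = (\<Sum>i\<in>I. (d i)^2)"
  define P where "P = (\<Sum>i\<in>I. d i * e i)"
  have SD: "S \<le> D2" unfolding S_def d_def using dist[OF r0(1)] .
  have S0: "S \<ge> 0" unfolding S_def by (simp add: sum_nonneg)
  have f1: "(\<Sum>i\<in>I. (\<phi> i x0 - cen i)^2) = (1 + R)^2 * E"
  proof -
    have "(\<Sum>i\<in>I. (\<phi> i x0 - cen i)^2) = (\<Sum>i\<in>I. (1 + R)^2 * (e i)^2)"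
      unfolding cen_def e_def by (rule sum.cong) (simp_all add: power2_eq_square algebra_simps)
    then show ?thesis unfolding Ee by (simp add: sum_distrib_left)
  qed
  have f2: "(\<Sum>i\<in>I. (\<phi> i r0 - cen i)^2) = S + 2 * R * P + R^2 * E"
  proof -
    have "(\<Sum>i\<in>I. (\<phi> i r0 - cen i)^2) = (\<Sum>i\<in>I. (d i)^2 + (2 * R) * (d i * e i) + R^2 * (e i)^2)"
      unfolding cen_def d_def by (rule sum.cong) (simp_all add: power2_eq_square algebra_simps)
    then show ?thesis unfolding Ee S_def P_def by (simp add: sum.distrib sum_distrib_left)
  qed
  have "(1 + R)^2 * E < S + 2 * R * P + R^2 * E + \<alpha>" using far x0 f1 f2 by force
  moreover have "(1 + R)^2 * E = E + 2 * (R * E) + R^2 * E" by (simp add: power2_eq_square algebra_simps)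
  ultimately have "E + 2 * (R * E) < S + 2 * R * P + \<alpha>" by linarith
  then have "R * E < 2 * R * P" using RE SD E0 by linarith
  then have "R * E < R * (2 * P)" by simp
  then have PE: "E < 2 * P" using R0 by (simp add: mult_less_cancel_left_pos)
  define \<tau> where "\<tau> = E / (2 * D2)"
  have \<tau>0: "\<tau> > 0" unfolding \<tau>_def using E0 D0 by simp
  have \<tau>1: "\<tau> \<le> 1" unfolding \<tau>_def using ED D0 by (simp add: field_simps)
  define lam' where "lam' j = (if j < m then (1 - \<tau>) * lam j else \<tau>)" for j
  define c' where "c' = c(m := cn)"
  define t' where "t' = t(m := tn)"
  define r' where "r' = r(m := r0)"
  have inv': "GInv I \<phi> K \<rho> (Suc m) lam' c' t' r'"
    unfolding GInv_def
  proof (intro conjI)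
    show "\<forall>j<Suc m. lam' j \<ge> 0" unfolding lam'_def using inv \<tau>0 \<tau>1 unfolding GInv_def by auto
  next
    have "(\<Sum>j<Suc m. lam' j) = (\<Sum>j<m. (1 - \<tau>) * lam j) + \<tau>"
      unfolding lam'_def by (simp add: sum.lessThan_Suc)
    also have "\<dots> = 1" using inv unfolding GInv_def by (simp add: sum_distrib_left[symmetric])
    finally show "(\<Sum>j<Suc m. lam' j) = 1" .
  next
    show "\<forall>j<Suc m. r' j \<in> K \<and> (\<Sum>i\<in>I. c' j i * \<phi> i (r' j)) > t' j \<and>
      (\<forall>k\<in>K. (\<Sum>i\<in>I. c' j i * \<phi> i k) > t' j \<longrightarrow> (\<Sum>i\<in>I. (\<phi> i k - \<phi> i (r' j))^2) < \<rho>^2)"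
    proof (intro allI impI)
      fix j assume j: "j < Suc m"
      show "r' j \<in> K \<and> (\<Sum>i\<in>I. c' j i * \<phi> i (r' j)) > t' j \<and>
        (\<forall>k\<in>K. (\<Sum>i\<in>I. c' j i * \<phi> i k) > t' j \<longrightarrow> (\<Sum>i\<in>I. (\<phi> i k - \<phi> i (r' j))^2) < \<rho>^2)"
      proof (cases "j = m")
        case True
        then show ?thesis unfolding c'_def t'_def r'_def using r0 rad unfolding \<alpha>_def by simp
      next
        case False
        then have "j < m" using j by simp
        then show ?thesis unfolding c'_def t'_def r'_def using inv False unfolding GInv_def by simp
      qed
    qed
  qed
  have comb': "comb \<phi> (Suc m) lam' r' i = a i + \<tau> * d i" for i
  proof -
    have "comb \<phi> (Suc m) lam' r' i = (\<Sum>j<m. (1 - \<tau>) * (lam j * \<phi> i (r j))) + \<tau> * \<phi> i r0"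
      unfolding comb_def lam'_def r'_def by (simp add: sum.lessThan_Suc mult.assoc)
    also have "\<dots> = (1 - \<tau>) * a i + \<tau> * \<phi> i r0" unfolding a_def comb_def by (simp add: sum_distrib_left)
    finally show ?thesis unfolding d_def by (simp add: algebra_simps)
  qed
  have "Err I \<phi> x0 (Suc m) lam' r' = (\<Sum>i\<in>I. (e i)^2 - (2 * \<tau>) * (d i * e i) + \<tau>^2 * (d i)^2)"
    unfolding Err_def comb' e_def by (rule sum.cong) (simp_all add: power2_eq_square algebra_simps)
  also have "\<dots> = E - 2 * \<tau> * P + \<tau>^2 * S"
    unfolding Ee P_def S_def by (simp add: sum.distrib sum_subtractf sum_distrib_left)
  also have "\<dots> \<le> E - \<tau> * E + \<tau>^2 * D2"
  proof -
    have "\<tau> * E \<le> 2 * \<tau> * P" using PE \<tau>0 by (simp add: mult_left_mono)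
    moreover have "\<tau>^2 * S \<le> \<tau>^2 * D2" using SD by (simp add: mult_left_mono)
    ultimately show ?thesis by linarith
  qed
  also have "\<dots> = E - E^2 / (4 * D2)" unfolding \<tau>_def using D0 by (simp add: field_simps power2_eq_square)
  also have "\<dots> \<le> E - \<rho>^4 / (4 * D2)"
  proof -
    have "(\<rho>^2)^2 \<le> E^2" using Epos \<rho> by (intro power_mono) auto
    then have "\<rho>^4 \<le> E^2" by (simp add: power_mult[symmetric])
    then have "\<rho>^4 / (4 * D2) \<le> E^2 / (4 * D2)" using D0 by (simp add: divide_right_mono)
    then show ?thesis by linarith
  qed
  finally show ?thesis using inv' unfolding E_def D2_def by blast
qed

lemma greedy_iter:
  fixes \<phi> :: "'i \<Rightarrow> 'a \<Rightarrow> real" and N :: nat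
  assumes fin: "finite I" and bnd: "\<forall>i\<in>I. \<forall>k\<in>K. \<bar>\<phi> i k\<bar> \<le> M" and x0: "x0 \<in> K" and \<rho>: "\<rho> > 0"
  shows "\<forall>m lam c t r. GInv I \<phi> K \<rho> m lam c t r \<and>
      Err I \<phi> x0 m lam r < \<rho>^2 + real N * (\<rho>^4 / (4 * (real (card I) * (2*M)^2))) \<longrightarrow>
      (\<exists>m' lam' c' t' r'. GInv I \<phi> K \<rho> m' lam' c' t' r' \<and> Err I \<phi> x0 m' lam' r' < \<rho>^2)"
proof (induction N)
  case 0 then show ?case by auto
next
  case (Suc N)
  show ?case
  proof (intro allI impI, elim conjE)
    fix m lam c t r
    assume inv: "GInv I \<phi> K \<rho> m lam c t r"
      and lt: "Err I \<phi> x0 m lam r < \<rho>^2 + real (Suc N) * (\<rho>^4 / (4 * (real (card I) * (2*M)^2)))"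
    show "\<exists>m' lam' c' t' r'. GInv I \<phi> K \<rho> m' lam' c' t' r' \<and> Err I \<phi> x0 m' lam' r' < \<rho>^2"
    proof (cases "Err I \<phi> x0 m lam r < \<rho>^2")
      case True then show ?thesis using inv by blast
    next
      case False
      then obtain lam' c' t' r' where st: "GInv I \<phi> K \<rho> (Suc m) lam' c' t' r'"
        "Err I \<phi> x0 (Suc m) lam' r' \<le> Err I \<phi> x0 m lam r - \<rho>^4 / (4 * (real (card I) * (2*M)^2))"
        using greedy_step[OF fin bnd x0 \<rho> inv] by force
      have key: "\<And>E1 E0 g. E1 \<le> E0 - g \<Longrightarrow> E0 < \<rho>^2 + real (Suc N) * g \<Longrightarrow> E1 < \<rho>^2 + real N * g"
        by (simp add: algebra_simps)
      have "Err I \<phi> x0 (Suc m) lam' r' < \<rho>^2 + real N * (\<rho>^4 / (4 * (real (card I) * (2*M)^2)))"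
        using key[OF st(2) lt] .
      then show ?thesis using Suc.IH st(1) by blast
    qed
  qed
qed

lemma greedy_main:
  fixes \<phi> :: "'i \<Rightarrow> 'a \<Rightarrow> real"
  assumes fin: "finite I" and bnd: "\<forall>i\<in>I. \<forall>k\<in>K. \<bar>\<phi> i k\<bar> \<le> M" and x0: "x0 \<in> K" and \<delta>: "\<delta> > 0"
  shows "\<exists>(m::nat) lam c t. (\<forall>j<m. lam j \<ge> 0) \<and> (\<Sum>j<m. lam j) = 1 \<and>
     (\<forall>j<m. \<exists>k\<in>K. (\<Sum>i\<in>I. c j i * \<phi> i k) > t j) \<and>
     (\<forall>\<kappa>. (\<forall>j<m. \<kappa> j \<in> K \<and> (\<Sum>i\<in>I. c j i * \<phi> i (\<kappa> j)) > t j) \<longrightarrow>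
        (\<forall>i\<in>I. \<bar>(\<Sum>j<m. lam j * \<phi> i (\<kappa> j)) - \<phi> i x0\<bar> < \<delta>))"
proof -
  define \<rho> where "\<rho> = \<delta> / 3"
  have \<rho>: "\<rho> > 0" unfolding \<rho>_def using \<delta> by simp
  define D2 where "D2 = real (card I) * (2*M)^2"
  define \<gamma> where "\<gamma> = \<rho>^4 / (4 * D2)"
  have \<alpha>0: "\<rho>^2 / 3 > 0" using \<rho> by simp
  obtain r0 cn tn where r0: "r0 \<in> K" "(\<Sum>i\<in>I. cn i * \<phi> i r0) > tn"
    and rad: "\<forall>k\<in>K. (\<Sum>i\<in>I. cn i * \<phi> i k) > tn \<longrightarrow> (\<Sum>i\<in>I. (\<phi> i k - \<phi> i r0)^2) < 3 * (\<rho>^2 / 3)"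
    using slice_lemma[OF fin bnd _ \<alpha>0, of "\<lambda>i. 0"] x0 by blast
  have inv0: "GInv I \<phi> K \<rho> 1 (\<lambda>j. 1) (\<lambda>j. cn) (\<lambda>j. tn) (\<lambda>j. r0)"
    unfolding GInv_def using r0 rad by simp
  have cm: "comb \<phi> 1 (\<lambda>j. 1) (\<lambda>j. r0) i = \<phi> i r0" for i unfolding comb_def by simp
  have E0: "Err I \<phi> x0 1 (\<lambda>j. 1) (\<lambda>j. r0) \<le> D2"
    unfolding Err_def D2_def
  proof (rule sum_sq_le_card[OF fin])
    fix i assume i: "i \<in> I"
    have "\<bar>\<phi> i x0\<bar> \<le> M" "\<bar>\<phi> i r0\<bar> \<le> M" using bnd i x0 r0(1) by auto
    then have "\<bar>\<phi> i x0 - \<phi> i r0\<bar> \<le> 2 * M" by (smt (verit))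
    then show "\<bar>\<phi> i x0 - comb \<phi> 1 (\<lambda>j. 1) (\<lambda>j. r0) i\<bar> \<le> 2 * M" using cm by simp
  qed
  obtain N :: nat where N: "Err I \<phi> x0 1 (\<lambda>j. 1) (\<lambda>j. r0) < \<rho>^2 + real N * \<gamma>"
  proof (cases "D2 = 0")
    case True
    have "\<rho>^2 > 0" using \<rho> by simp
    moreover have "Err I \<phi> x0 1 (\<lambda>j. 1) (\<lambda>j. r0) \<le> 0" using E0 True by simp
    ultimately have "Err I \<phi> x0 1 (\<lambda>j. 1) (\<lambda>j. r0) < \<rho>^2" by linarith
    then have "Err I \<phi> x0 1 (\<lambda>j. 1) (\<lambda>j. r0) < \<rho>^2 + real 0 * \<gamma>" by simp
    then show ?thesis by (rule that)
  next
    case False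
    then have D0: "D2 > 0" unfolding D2_def by simp
    then have g0: "\<gamma> > 0" unfolding \<gamma>_def using \<rho> by simp
    obtain N :: nat where "D2 / \<gamma> < real N" using reals_Archimedean2 by blast
    then have "D2 < real N * \<gamma>" using g0 by (simp add: field_simps)
    moreover have "\<rho>^2 > 0" using \<rho> by simp
    ultimately have "Err I \<phi> x0 1 (\<lambda>j. 1) (\<lambda>j. r0) < \<rho>^2 + real N * \<gamma>" using E0 by linarith
    then show ?thesis by (rule that)
  qed
  obtain m lam c t r where inv: "GInv I \<phi> K \<rho> m lam c t r" and small: "Err I \<phi> x0 m lam r < \<rho>^2"
    using greedy_iter[OF fin bnd x0 \<rho>, of N] inv0 N unfolding \<gamma>_def D2_def by blast
  have lam0: "\<forall>j<m. lam j \<ge> 0" and lam1: "(\<Sum>j<m. lam j) = 1"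
    and sl: "\<forall>j<m. r j \<in> K \<and> (\<Sum>i\<in>I. c j i * \<phi> i (r j)) > t j \<and>
      (\<forall>k\<in>K. (\<Sum>i\<in>I. c j i * \<phi> i k) > t j \<longrightarrow> (\<Sum>i\<in>I. (\<phi> i k - \<phi> i (r j))^2) < \<rho>^2)"
    using inv unfolding GInv_def by auto
  have concl: "\<bar>(\<Sum>j<m. lam j * \<phi> i (\<kappa> j)) - \<phi> i x0\<bar> < \<delta>"
    if \<kappa>: "\<forall>j<m. \<kappa> j \<in> K \<and> (\<Sum>i\<in>I. c j i * \<phi> i (\<kappa> j)) > t j" and i: "i \<in> I" for \<kappa> i
  proof -
    have cl: "\<bar>\<phi> i (\<kappa> j) - \<phi> i (r j)\<bar> < \<rho>" if j: "j < m" for j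
    proof -
      have "(\<Sum>i\<in>I. (\<phi> i (\<kappa> j) - \<phi> i (r j))^2) < \<rho>^2" using sl \<kappa> j by blast
      then have "(\<phi> i (\<kappa> j) - \<phi> i (r j))^2 < \<rho>^2"
        using term_le_sum_sq[OF fin i, of "\<lambda>i. \<phi> i (\<kappa> j) - \<phi> i (r j)"] by linarith
      then show ?thesis using abs_lt_of_sq \<rho> by simp
    qed
    have "(\<phi> i x0 - comb \<phi> m lam r i)^2 < \<rho>^2"
      using small term_le_sum_sq[OF fin i, of "\<lambda>i. \<phi> i x0 - comb \<phi> m lam r i"] unfolding Err_def by linarith
    then have c1: "\<bar>\<phi> i x0 - comb \<phi> m lam r i\<bar> < \<rho>" using abs_lt_of_sq \<rho> by simp
    have "\<bar>(\<Sum>j<m. lam j * \<phi> i (\<kappa> j)) - comb \<phi> m lam r i\<bar> = \<bar>\<Sum>j<m. lam j * (\<phi> i (\<kappa> j) - \<phi> i (r j))\<bar>"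
      unfolding comb_def by (simp add: sum_subtractf right_diff_distrib)
    also have "\<dots> \<le> (\<Sum>j<m. \<bar>lam j * (\<phi> i (\<kappa> j) - \<phi> i (r j))\<bar>)" by (rule sum_abs)
    also have "\<dots> \<le> (\<Sum>j<m. lam j * \<rho>)"
    proof (rule sum_mono)
      fix j assume "j \<in> {..<m}"
      then have "j < m" by simp
      then show "\<bar>lam j * (\<phi> i (\<kappa> j) - \<phi> i (r j))\<bar> \<le> lam j * \<rho>"
        using cl lam0 by (simp add: abs_mult mult_left_mono less_imp_le)
    qed
    also have "\<dots> = \<rho>" using lam1 by (simp add: sum_distrib_right[symmetric])
    finally show ?thesis using c1 unfolding \<rho>_def by linarith
  qed
  have A: "\<forall>j<m. \<exists>k\<in>K. (\<Sum>i\<in>I. c j i * \<phi> i k) > t j" using sl by blast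
  have B: "\<forall>\<kappa>. (\<forall>j<m. \<kappa> j \<in> K \<and> (\<Sum>i\<in>I. c j i * \<phi> i (\<kappa> j)) > t j) \<longrightarrow>
        (\<forall>i\<in>I. \<bar>(\<Sum>j<m. lam j * \<phi> i (\<kappa> j)) - \<phi> i x0\<bar> < \<delta>)"
    using concl by (intro allI impI ballI)
  show ?thesis
    apply (rule exI[where x=m])
    apply (rule exI[where x=lam])
    apply (rule exI[where x=c])
    apply (rule exI[where x=t])
    apply (intro conjI)
       apply (rule lam0)
      apply (rule lam1)
     apply (rule A)
    apply (rule B)
    done
qed

lemma exists_unit_vec:
  assumes "subspace X" "X \<noteq> {0}"
  shows "\<exists>x1\<in>X. norm x1 = 1"
proof -
  obtain x where x: "x \<in> X" "x \<noteq> 0" using assms subspace_0 by blast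
  then have "(1 / norm x) *\<^sub>R x \<in> X" using assms(1) by (simp add: subspace_scale)
  moreover have "norm ((1 / norm x) *\<^sub>R x) = 1" using x by simp
  ultimately show ?thesis by blast
qed

lemma exists_unit_dual:
  assumes X: "subspace X" "X \<noteq> {0}"
  shows "\<exists>xs\<in>dual_on X. op_norm_on X xs = 1"
proof -
  obtain x1 where x1: "x1 \<in> X" "norm x1 = 1" using exists_unit_vec[OF X] by blast
  obtain \<phi> where \<phi>: "bounded_linear \<phi>" "\<forall>x. \<bar>\<phi> x\<bar> \<le> norm x" "\<phi> x1 = norm x1"
    using hahn_banach_norming[of x1] by blast
  have "op_norm_on X \<phi> \<le> 1"
  proof (rule opn_le[OF X(1)])
    fix x assume "x \<in> unit_ball_on X"
    then show "norm (\<phi> x) \<le> 1" using \<phi>(2) ubD by (metis real_norm_def order_trans)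
  qed
  moreover have "norm (\<phi> x1) \<le> op_norm_on X \<phi>" using opn_ge[OF bl_opbnd[OF \<phi>(1)] ubI[OF x1(1)]] x1(2) by simp
  ultimately have "op_norm_on X \<phi> = 1" using \<phi>(3) x1 by simp
  then show ?thesis using bl_dual[OF \<phi>(1)] by blast
qed

lemma norm_shift:
  fixes z u :: "'a::real_normed_vector"
  assumes z: "norm z \<ge> 1" and u: "norm u \<le> 1" and e: "norm (u + (1 / norm z) *\<^sub>R z) > 2 - e1"
  shows "norm (z + u) \<ge> norm z + 1 - norm z * e1"
proof -
  have nz: "norm z > 0" using z by linarith
  have "norm z *\<^sub>R (u + (1 / norm z) *\<^sub>R z) = (z + u) + (norm z - 1) *\<^sub>R u"
    using nz by (simp add: algebra_simps)
  then have "norm (norm z *\<^sub>R (u + (1 / norm z) *\<^sub>R z)) \<le> norm (z + u) + norm ((norm z - 1) *\<^sub>R u)"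
    by (metis norm_triangle_ineq)
  moreover have "norm (norm z *\<^sub>R (u + (1 / norm z) *\<^sub>R z)) = norm z * norm (u + (1 / norm z) *\<^sub>R z)"
    by simp
  moreover have "norm ((norm z - 1) *\<^sub>R u) \<le> norm z - 1"
  proof -
    have "norm ((norm z - 1) *\<^sub>R u) = (norm z - 1) * norm u" using z by simp
    also have "\<dots> \<le> (norm z - 1) * 1" using z u by (intro mult_left_mono) auto
    finally show ?thesis by simp
  qed
  moreover have "norm z * norm (u + (1 / norm z) *\<^sub>R z) \<ge> norm z * (2 - e1)"
    using e nz by (intro mult_left_mono) auto
  moreover have "norm z * (2 - e1) = 2 * norm z - norm z * e1" by (simp add: algebra_simps)
  ultimately show ?thesis by linarith
qed

lemma wstep:
  fixes X :: "'y::real_normed_vector set"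
  assumes X: "subspace X" "X \<noteq> {0}" and S: "Sprop X" and z: "norm z \<ge> 1"
    and g: "g \<in> dual_on X" and u0: "u0 \<in> unit_ball_on X" "g u0 > t" and e: "\<epsilon> > 0"
  shows "\<exists>u\<in>unit_ball_on X. g u > t \<and> norm (z + u) \<ge> norm z + 1 - \<epsilon>"
proof -
  have nz: "norm z > 0" using z by linarith
  define y where "y = (1 / norm z) *\<^sub>R z"
  have y: "norm y = 1" unfolding y_def using nz by simp
  have og: "opbnd X g" using dual_opbnd[OF g] .
  obtain xs \<epsilon>' where xs: "xs \<in> dual_on X" "op_norm_on X xs = 1" "\<epsilon>' > 0"
    and imp: "\<And>u. u \<in> unit_ball_on X \<Longrightarrow> xs u > 1 - \<epsilon>' \<Longrightarrow> g u > t"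
  proof (cases "op_norm_on X g > 0")
    case True
    define n where "n = op_norm_on X g"
    have n: "n > 0" using True n_def by simp
    have "g u0 \<le> n" using opn_ge[OF og u0(1)] unfolding n_def by simp
    then have tn: "t < n" using u0(2) by simp
    define xs where "xs x = (1 / n) * g x" for x
    have xsd: "xs \<in> dual_on X" unfolding xs_def using dual_scale[OF g] .
    have "op_norm_on X xs = (1 / n) * op_norm_on X g"
      using opn_scale[OF X(1) og, of "1/n" xs] n unfolding xs_def by (simp add: abs_mult)
    then have xs1: "op_norm_on X xs = 1" using n unfolding n_def by simp
    have e': "1 - t / n > 0" using tn n by (simp add: field_simps)
    show ?thesis
    proof (rule that[OF xsd xs1 e'])
      fix u assume "u \<in> unit_ball_on X" "xs u > 1 - (1 - t / n)"
      then have "(1 / n) * g u > t / n" unfolding xs_def by simp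
      then show "g u > t" using n by (simp add: field_simps)
    qed
  next
    case False
    then have g0: "\<And>u. u \<in> unit_ball_on X \<Longrightarrow> g u = 0"
      using opn_ge[OF og] opn_nonneg[OF X(1) og] by fastforce
    then have t0: "t < 0" using u0 by simp
    obtain xs where "xs \<in> dual_on X" "op_norm_on X xs = 1" using exists_unit_dual[OF X] by blast
    then show ?thesis using that[of xs 1] g0 t0 by simp
  qed
  define e1 where "e1 = min \<epsilon>' (\<epsilon> / norm z)"
  have e1: "e1 > 0" unfolding e1_def using xs(3) e nz by simp
  obtain u where u: "u \<in> unit_ball_on X" "xs u > 1 - e1" "norm (u + y) > 2 - e1"
    using S e1 y xs(1,2) unfolding Sprop_def by blast
  have "g u > t" using imp[OF u(1)] u(2) unfolding e1_def by simp
  moreover have "norm (z + u) \<ge> norm z + 1 - norm z * e1"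
    using norm_shift[OF z _ u(3)[unfolded y_def]] ubD[OF u(1)] by simp
  moreover have "norm z * e1 \<le> \<epsilon>" unfolding e1_def using nz
    by (simp add: field_simps min_def)
  ultimately show ?thesis using u(1) by (intro bexI[of _ u]) auto
qed

lemma witer:
  fixes X :: "'y::real_normed_vector set"
  assumes X: "subspace X" "X \<noteq> {0}" and S: "Sprop X" and y: "norm y = 1"
  shows "(\<forall>j<m. g j \<in> dual_on X \<and> (\<exists>u\<in>unit_ball_on X. g j u > t j)) \<longrightarrow>
    (\<forall>\<eta>. 0 < \<eta> \<longrightarrow> \<eta> \<le> 1 \<longrightarrow> (\<exists>\<kappa>. (\<forall>j<m. \<kappa> j \<in> unit_ball_on X \<and> g j (\<kappa> j) > t j) \<and>
       norm (y + (\<Sum>j<m. \<kappa> j)) \<ge> 1 + real m - \<eta> \<and> norm (y + (\<Sum>j<m. \<kappa> j)) \<ge> 1))"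
proof (induction m)
  case 0 then show ?case using y by simp
next
  case (Suc m)
  show ?case
  proof (intro impI allI)
    fix \<eta> :: real assume sl: "\<forall>j<Suc m. g j \<in> dual_on X \<and> (\<exists>u\<in>unit_ball_on X. g j u > t j)"
      and h: "0 < \<eta>" "\<eta> \<le> 1"
    have h2: "0 < \<eta> / 2" "\<eta> / 2 \<le> 1" using h by auto
    obtain \<kappa> where \<kappa>: "\<forall>j<m. \<kappa> j \<in> unit_ball_on X \<and> g j (\<kappa> j) > t j"
      "norm (y + (\<Sum>j<m. \<kappa> j)) \<ge> 1 + real m - \<eta> / 2" "norm (y + (\<Sum>j<m. \<kappa> j)) \<ge> 1"
      using Suc.IH sl h2 by (meson less_SucI)
    obtain u0 where u0: "u0 \<in> unit_ball_on X" "g m u0 > t m" and gm: "g m \<in> dual_on X" using sl by blast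
    obtain u where u: "u \<in> unit_ball_on X" "g m u > t m"
      "norm ((y + (\<Sum>j<m. \<kappa> j)) + u) \<ge> norm (y + (\<Sum>j<m. \<kappa> j)) + 1 - \<eta> / 2"
      using wstep[OF X S \<kappa>(3) gm u0 h2(1)] by blast
    define \<kappa>' where "\<kappa>' = \<kappa>(m := u)"
    have s: "(\<Sum>j<Suc m. \<kappa>' j) = (\<Sum>j<m. \<kappa> j) + u"
      unfolding \<kappa>'_def by (simp add: sum.lessThan_Suc)
    have "norm (y + (\<Sum>j<Suc m. \<kappa>' j)) \<ge> 1 + real (Suc m) - \<eta>"
      using u(3) \<kappa>(2) s by (simp add: add.assoc)
    moreover then have "norm (y + (\<Sum>j<Suc m. \<kappa>' j)) \<ge> 1" using h by simp
    moreover have "\<forall>j<Suc m. \<kappa>' j \<in> unit_ball_on X \<and> g j (\<kappa>' j) > t j"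
      unfolding \<kappa>'_def using \<kappa>(1) u(1,2) by (simp add: less_Suc_eq)
    ultimately show "\<exists>\<kappa>. (\<forall>j<Suc m. \<kappa> j \<in> unit_ball_on X \<and> g j (\<kappa> j) > t j) \<and>
       norm (y + (\<Sum>j<Suc m. \<kappa> j)) \<ge> 1 + real (Suc m) - \<eta> \<and> norm (y + (\<Sum>j<Suc m. \<kappa> j)) \<ge> 1"
      by blast
  qed
qed

lemma S_to_b:
  fixes X :: "'y::real_normed_vector set"
  assumes X: "subspace X" "X \<noteq> {0}" and S: "Sprop X"
  shows "\<forall>\<epsilon>>0. \<forall>y. norm y = 1 \<longrightarrow>
              (\<forall>U. openin (weak_top X) U \<and> U \<inter> unit_ball_on X \<noteq> {} \<longrightarrow>
                (\<exists>V. openin (weak_top X) V \<and> V \<inter> unit_ball_on X \<noteq> {} \<and>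
                     V \<inter> unit_ball_on X \<subseteq> U \<inter> unit_ball_on X \<and>
                     (\<forall>v\<in>V \<inter> unit_ball_on X. norm (v + y) > 2 - \<epsilon>)))"
proof (intro allI impI, elim conjE)
  fix \<epsilon> :: real and y :: 'y and U
  assume e: "\<epsilon> > 0" and y: "norm y = 1" and U: "openin (weak_top X) U" and Une: "U \<inter> unit_ball_on X \<noteq> {}"
  obtain x0 where x0: "x0 \<in> U" "x0 \<in> unit_ball_on X" using Une by blast
  obtain I \<delta> where I: "finite I" "I \<subseteq> dual_on X" "\<delta> > 0" and IU: "{x\<in>X. \<forall>f\<in>I. \<bar>f x - f x0\<bar> < \<delta>} \<subseteq> U"
    using weak_nbhd[OF U x0(1)] unfolding wnb_def by blast
  define M where "M = (\<Sum>f\<in>I. op_norm_on X f)"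
  have bnd: "\<forall>f\<in>I. \<forall>k\<in>unit_ball_on X. \<bar>f k\<bar> \<le> M"
  proof (intro ballI)
    fix f k assume f: "f \<in> I" and k: "k \<in> unit_ball_on X"
    have "\<bar>f k\<bar> \<le> op_norm_on X f" using opn_ge[OF dual_opbnd k] f I(2) by fastforce
    also have "\<dots> \<le> M" unfolding M_def using f I(1,2)
      by (intro member_le_sum) (auto intro: opn_nonneg[OF X(1) dual_opbnd])
    finally show "\<bar>f k\<bar> \<le> M" .
  qed
  obtain m :: nat and lam c t where lam0: "\<forall>j<m. lam j \<ge> 0" and lam1: "(\<Sum>j<m. lam j) = 1"
    and slne: "\<forall>j<m. \<exists>k\<in>unit_ball_on X. (\<Sum>f\<in>I. c j f * f k) > t j"
    and close: "\<forall>\<kappa>. (\<forall>j<m. \<kappa> j \<in> unit_ball_on X \<and> (\<Sum>f\<in>I. c j f * f (\<kappa> j)) > t j) \<longrightarrow>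
        (\<forall>f\<in>I. \<bar>(\<Sum>j<m. lam j * f (\<kappa> j)) - f x0\<bar> < \<delta>)"
    using greedy_main[where \<phi>="\<lambda>f x. f x", OF I(1) _ x0(2) I(3), OF bnd] by blast
  define g where "g j = (\<lambda>x. \<Sum>f\<in>I. c j f * f x)" for j
  have gd: "g j \<in> dual_on X" for j
    unfolding g_def using I by (intro dual_sum dual_scale) auto
  define \<eta> where "\<eta> = min 1 (\<epsilon> / 3)"
  have \<eta>: "0 < \<eta>" "\<eta> \<le> 1" "3 * \<eta> \<le> \<epsilon>" unfolding \<eta>_def using e by auto
  obtain \<kappa> where \<kappa>: "\<forall>j<m. \<kappa> j \<in> unit_ball_on X \<and> g j (\<kappa> j) > t j"
    and nb: "norm (y + (\<Sum>j<m. \<kappa> j)) \<ge> 1 + real m - \<eta>"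
    using witer[OF X S y, of m g t] gd slne \<eta>(1,2) unfolding g_def by blast
  have \<kappa>X: "\<kappa> j \<in> X" "norm (\<kappa> j) \<le> 1" if "j < m" for j using \<kappa> that ubD by auto
  obtain \<psi> where \<psi>: "bounded_linear \<psi>" "\<forall>x. \<bar>\<psi> x\<bar> \<le> norm x" "\<psi> (y + (\<Sum>j<m. \<kappa> j)) = norm (y + (\<Sum>j<m. \<kappa> j))"
    using hahn_banach_norming by blast
  have lp: "linear \<psi>" using \<psi>(1) bounded_linear.linear by blast
  have \<psi>sum: "\<psi> (y + (\<Sum>j<m. \<kappa> j)) = \<psi> y + (\<Sum>j<m. \<psi> (\<kappa> j))"
    using linear_add[OF lp] linear_sum[OF lp] by simp
  have \<psi>y1: "\<psi> y \<le> 1" using \<psi>(2) y by (metis abs_le_D1)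
  have \<psi>k1: "\<psi> (\<kappa> j) \<le> 1" if "j < m" for j using \<psi>(2) \<kappa>X[OF that] by (metis abs_le_D1 order_trans)
  have tot: "(1 - \<psi> y) + (\<Sum>j<m. 1 - \<psi> (\<kappa> j)) \<le> \<eta>"
    using nb \<psi>(3) \<psi>sum by (simp add: sum_subtractf)
  have nn: "(\<Sum>j<m. 1 - \<psi> (\<kappa> j)) \<ge> 0" using \<psi>k1 by (intro sum_nonneg) auto
  have \<psi>y: "\<psi> y \<ge> 1 - \<eta>" using tot nn by linarith
  have \<psi>k: "\<psi> (\<kappa> j) \<ge> 1 - \<eta>" if j: "j < m" for j
  proof -
    have "1 - \<psi> (\<kappa> j) \<le> (\<Sum>j<m. 1 - \<psi> (\<kappa> j))"
      using j \<psi>k1 by (intro member_le_sum) auto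
    then show ?thesis using tot \<psi>y1 by linarith
  qed
  define u where "u = (\<Sum>j<m. lam j *\<^sub>R \<kappa> j)"
  have uX: "u \<in> X" unfolding u_def using \<kappa>X X(1) by (intro subspace_sum subspace_scale) auto
  have un: "norm u \<le> 1"
  proof -
    have "norm u \<le> (\<Sum>j<m. norm (lam j *\<^sub>R \<kappa> j))" unfolding u_def by (rule norm_sum)
    also have "\<dots> \<le> (\<Sum>j<m. lam j)"
    proof (rule sum_mono)
      fix j assume "j \<in> {..<m}"
      then have "j < m" by simp
      then show "norm (lam j *\<^sub>R \<kappa> j) \<le> lam j" using lam0 \<kappa>X
        by (simp add: mult_left_le)
    qed
    finally show ?thesis using lam1 by simp
  qed
  have ub: "u \<in> unit_ball_on X" using uX un by (rule ubI)
  have fu: "f u = (\<Sum>j<m. lam j * f (\<kappa> j))" if "f \<in> dual_on X" for f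
  proof -
    have l: "lin_on X f" using dual_lin[OF that] .
    have mem: "lam j *\<^sub>R \<kappa> j \<in> X" if "j \<in> {..<m}" for j
      using \<kappa>X that X(1) by (simp add: subspace_scale)
    have "f u = (\<Sum>j<m. f (lam j *\<^sub>R \<kappa> j))" unfolding u_def
      using lin_on_sum[OF X(1) l finite_lessThan mem] .
    also have "\<dots> = (\<Sum>j<m. lam j * f (\<kappa> j))" using lin_on_scale[OF l] \<kappa>X by simp
    finally show ?thesis .
  qed
  have uU: "u \<in> U"
  proof -
    have cl: "\<forall>f\<in>I. \<bar>(\<Sum>j<m. lam j * f (\<kappa> j)) - f x0\<bar> < \<delta>"
      using close \<kappa> unfolding g_def by blast
    have "\<forall>f\<in>I. \<bar>f u - f x0\<bar> < \<delta>"
    proof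
      fix f assume f: "f \<in> I"
      then have "f u = (\<Sum>j<m. lam j * f (\<kappa> j))" using fu I(2) by blast
      then show "\<bar>f u - f x0\<bar> < \<delta>" using cl f by simp
    qed
    then show ?thesis using IU uX by blast
  qed
  have \<psi>u: "\<psi> u \<ge> 1 - \<eta>"
  proof -
    have "\<psi> u = (\<Sum>j<m. lam j * \<psi> (\<kappa> j))" using fu[OF bl_dual[OF \<psi>(1)]] .
    also have "\<dots> \<ge> (\<Sum>j<m. lam j * (1 - \<eta>))"
      using lam0 \<psi>k by (intro sum_mono mult_left_mono) auto
    moreover have "(\<Sum>j<m. lam j * (1 - \<eta>)) = 1 - \<eta>" using lam1 by (simp add: sum_distrib_right[symmetric])
    ultimately show ?thesis by simp
  qed
  define V where "V = U \<inter> {x\<in>X. \<psi> x \<in> {1 - 2 * \<eta><..}}"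
  have Vo: "openin (weak_top X) V" unfolding V_def
    using U weak_open_basic[OF bl_dual[OF \<psi>(1)], of "{1 - 2 * \<eta><..}"] by (intro openin_Int) auto
  have uV: "u \<in> V" unfolding V_def using uU uX \<psi>u \<eta>(1) by simp
  show "\<exists>V. openin (weak_top X) V \<and> V \<inter> unit_ball_on X \<noteq> {} \<and>
                     V \<inter> unit_ball_on X \<subseteq> U \<inter> unit_ball_on X \<and>
                     (\<forall>v\<in>V \<inter> unit_ball_on X. norm (v + y) > 2 - \<epsilon>)"
  proof (intro exI[of _ V] conjI)
    show "V \<inter> unit_ball_on X \<noteq> {}" using uV ub by blast
    show "V \<inter> unit_ball_on X \<subseteq> U \<inter> unit_ball_on X" unfolding V_def by blast
    show "\<forall>v\<in>V \<inter> unit_ball_on X. norm (v + y) > 2 - \<epsilon>"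
    proof
      fix v assume "v \<in> V \<inter> unit_ball_on X"
      then have "\<psi> v > 1 - 2 * \<eta>" unfolding V_def by simp
      moreover have "\<psi> (v + y) \<le> norm (v + y)" using \<psi>(2) by (metis abs_le_D1)
      moreover have "\<psi> (v + y) = \<psi> v + \<psi> y" using linear_add[OF lp] .
      ultimately show "norm (v + y) > 2 - \<epsilon>" using \<psi>y \<eta>(3) by linarith
    qed
  qed (rule Vo)
qed

lemma b_to_S:
  fixes X :: "'y::real_normed_vector set"
  assumes X: "subspace X" and B: "\<forall>\<epsilon>>0. \<forall>y. norm y = 1 \<longrightarrow>
              (\<forall>U. openin (weak_top X) U \<and> U \<inter> unit_ball_on X \<noteq> {} \<longrightarrow>
                (\<exists>V. openin (weak_top X) V \<and> V \<inter> unit_ball_on X \<noteq> {} \<and>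
                     V \<inter> unit_ball_on X \<subseteq> U \<inter> unit_ball_on X \<and>
                     (\<forall>v\<in>V \<inter> unit_ball_on X. norm (v + y) > 2 - \<epsilon>)))"
  shows "Sprop X"
  unfolding Sprop_def
proof (intro allI impI ballI)
  fix \<epsilon> :: real and y :: 'y and xs
  assume e: "\<epsilon> > 0" and y: "norm y = 1" and xs: "xs \<in> dual_on X" and xs1: "op_norm_on X xs = 1"
  define U where "U = {x\<in>X. xs x \<in> {1 - \<epsilon><..}}"
  have Uo: "openin (weak_top X) U" unfolding U_def by (rule weak_open_basic[OF xs]) simp
  obtain x where x: "x \<in> unit_ball_on X" "norm (xs x) > op_norm_on X xs - \<epsilon>"
    using opn_approx[OF X dual_opbnd[OF xs] e] by blast
  have xX: "x \<in> X" using ubD[OF x(1)] by simp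
  define x' where "x' = (if xs x \<ge> 0 then x else -x)"
  have x'b: "x' \<in> unit_ball_on X" unfolding x'_def using ub_neg[OF X x(1)] x(1) by simp
  have "xs x' = \<bar>xs x\<bar>" unfolding x'_def using lin_on_neg[OF dual_lin[OF xs] xX] by simp
  then have "x' \<in> U" unfolding U_def using x(2) xs1 ubD[OF x'b] by simp
  then have Une: "U \<inter> unit_ball_on X \<noteq> {}" using x'b by blast
  obtain V where V: "V \<inter> unit_ball_on X \<noteq> {}" "V \<inter> unit_ball_on X \<subseteq> U \<inter> unit_ball_on X"
    "\<forall>v\<in>V \<inter> unit_ball_on X. norm (v + y) > 2 - \<epsilon>"
    using B[rule_format, OF e y conjI[OF Uo Une]] by blast
  then obtain v where v: "v \<in> V \<inter> unit_ball_on X" by blast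
  then have "v \<in> U" "v \<in> unit_ball_on X" using V(2) by blast+
  then show "\<exists>x\<in>unit_ball_on X. xs x > 1 - \<epsilon> \<and> norm (x + y) > 2 - \<epsilon>"
    using V(3) v unfolding U_def by blast
qed

lemma unit_ball_le1: "v \<in> dual_unit_ball \<Longrightarrow> x \<in> unit_ball_on X \<Longrightarrow> \<bar>v x\<bar> \<le> 1"
proof -
  assume "v \<in> dual_unit_ball" "x \<in> unit_ball_on X"
  then have "\<bar>v x\<bar> \<le> norm x" "norm x \<le> 1" using dual_unit_ballD ubD by blast+
  then show ?thesis by linarith
qed

lemma dual_ball_opn: "subspace X \<Longrightarrow> v \<in> dual_unit_ball \<Longrightarrow> op_norm_on X v \<le> 1"
proof (rule opn_le)
  fix x assume "v \<in> dual_unit_ball" "x \<in> unit_ball_on X"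
  then have "\<bar>v x\<bar> \<le> 1" by (rule unit_ball_le1)
  then show "norm (v x) \<le> 1" by simp
qed

lemma dstep:
  fixes X :: "'y::real_normed_vector set"
  assumes X: "subspace X" "X \<noteq> {0}" and Sd: "Sdprop X" and \<phi>: "\<phi> \<in> dual_on X" and n1: "op_norm_on X \<phi> \<ge> 1"
    and v0: "v0 \<in> dual_unit_ball" "v0 w > t" and e: "\<epsilon> > 0"
  shows "\<exists>v\<in>dual_unit_ball. v w > t \<and> op_norm_on X (\<lambda>x. \<phi> x + v x) \<ge> op_norm_on X \<phi> + 1 - \<epsilon>"
proof -
  define n where "n = op_norm_on X \<phi>"
  have n: "n \<ge> 1" "n > 0" using n1 unfolding n_def by auto
  have o\<phi>: "opbnd X \<phi>" using dual_opbnd[OF \<phi>] .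
  define xs where "xs x = (1 / n) * \<phi> x" for x
  have xsd: "xs \<in> dual_on X" unfolding xs_def using dual_scale[OF \<phi>] .
  have "op_norm_on X xs = (1 / n) * op_norm_on X \<phi>"
    using opn_scale[OF X(1) o\<phi>, of "1/n" xs] n unfolding xs_def by (simp add: abs_mult)
  then have xs1: "op_norm_on X xs = 1" using n unfolding n_def by simp
  obtain y \<epsilon>' where y: "norm y = 1" "\<epsilon>' > 0"
    and imp: "\<And>v. v \<in> dual_unit_ball \<Longrightarrow> v y > 1 - \<epsilon>' \<Longrightarrow> v w > t"
  proof (cases "w = 0")
    case True
    have z: "v w = 0" if "v \<in> dual_unit_ball" for v
      using True linear_0[OF bounded_linear.linear[OF dual_unit_ballD[OF that, THEN conjunct1]]] by simp
    have t0: "t < 0" using v0 z[OF v0(1)] by simp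
    obtain y where "y \<in> X" "norm y = 1" using exists_unit_vec[OF X] by blast
    moreover have "v w > t" if "v \<in> dual_unit_ball" for v
    proof -
      have "v w = 0" using z[OF that] .
      then show ?thesis using t0 by linarith
    qed
    ultimately show ?thesis using that[of y 1] by simp
  next
    case False
    then have nw: "norm w > 0" by simp
    have "v0 w \<le> norm w" using dual_unit_ballD[OF v0(1)] by (metis abs_le_D1)
    then have tw: "t < norm w" using v0(2) by simp
    define y where "y = (1 / norm w) *\<^sub>R w"
    have yn: "norm y = 1" unfolding y_def using nw by simp
    have e': "1 - t / norm w > 0" using tw nw by (simp add: field_simps)
    show ?thesis
    proof (rule that[OF yn e'])
      fix v assume vb: "v \<in> dual_unit_ball" and vy: "v y > 1 - (1 - t / norm w)"
      have "v y = (1 / norm w) * v w" unfolding y_def using bl_lin(2)[OF dual_unit_ballD[OF vb, THEN conjunct1]] .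
      then have "(1 / norm w) * v w > t / norm w" using vy by simp
      then show "v w > t" using nw by (simp add: field_simps)
    qed
  qed
  define e1 where "e1 = min \<epsilon>' (\<epsilon> / n)"
  have e1: "e1 > 0" unfolding e1_def using y(2) e n by simp
  obtain v where v: "v \<in> dual_unit_ball" "v y > 1 - e1" "op_norm_on X (\<lambda>x. v x + xs x) > 2 - e1"
    using Sd e1 y(1) xsd xs1 unfolding Sdprop_def by blast
  have vbl: "bounded_linear v" using dual_unit_ballD[OF v(1)] by simp
  have ov: "opbnd X v" using bl_opbnd[OF vbl] .
  have ovx: "opbnd X (\<lambda>x. v x + xs x)" using opbnd_add[OF ov dual_opbnd[OF xsd]] .
  have o\<phi>v: "opbnd X (\<lambda>x. \<phi> x + v x)" using opbnd_add[OF o\<phi> ov] .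
  have "v w > t" using imp[OF v(1)] v(2) unfolding e1_def by simp
  moreover have "op_norm_on X (\<lambda>x. \<phi> x + v x) \<ge> n + 1 - \<epsilon>"
  proof -
    have eq: "(\<lambda>x. n * (v x + xs x)) = (\<lambda>x. (\<phi> x + v x) + (n - 1) * v x)"
      unfolding xs_def using n by (auto simp: algebra_simps)
    have "op_norm_on X (\<lambda>x. n * (v x + xs x)) = n * op_norm_on X (\<lambda>x. v x + xs x)"
      by (rule opn_scale[OF X(1) ovx]) (use n in \<open>auto simp: abs_mult\<close>)
    moreover have "op_norm_on X (\<lambda>x. (\<phi> x + v x) + (n - 1) * v x) \<le> op_norm_on X (\<lambda>x. \<phi> x + v x) + op_norm_on X (\<lambda>x. (n - 1) * v x)"
      using opn_triangle[OF X(1) o\<phi>v dual_opbnd[OF dual_scale[OF bl_dual[OF vbl]]]] .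
    moreover have "op_norm_on X (\<lambda>x. (n - 1) * v x) = (n - 1) * op_norm_on X v"
      by (rule opn_scale[OF X(1) ov]) (use n in \<open>auto simp: abs_mult\<close>)
    moreover have "op_norm_on X v \<le> 1" using dual_ball_opn[OF X(1) v(1)] .
    moreover have "(n - 1) * op_norm_on X v \<le> n - 1" using calculation(4) n by (simp add: mult_left_le)
    moreover have "n * op_norm_on X (\<lambda>x. v x + xs x) \<ge> n * (2 - e1)" using v(3) n by (intro mult_left_mono) auto
    moreover have "n * e1 \<le> \<epsilon>" unfolding e1_def using n by (simp add: field_simps min_def)
    moreover have "n * (2 - e1) = 2 * n - n * e1" by (simp add: algebra_simps)
    moreover have "op_norm_on X (\<lambda>x. n * (v x + xs x)) = op_norm_on X (\<lambda>x. (\<phi> x + v x) + (n - 1) * v x)"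
      using eq by simp
    ultimately show ?thesis by linarith
  qed
  ultimately show ?thesis using v(1) unfolding n_def by blast
qed

lemma diter:
  fixes X :: "'y::real_normed_vector set"
  assumes X: "subspace X" "X \<noteq> {0}" and Sd: "Sdprop X" and xs: "xs \<in> dual_on X" "op_norm_on X xs = 1"
  shows "(\<forall>j<m. \<exists>v0\<in>dual_unit_ball. v0 (w j) > t j) \<longrightarrow>
    (\<forall>\<eta>. 0 < \<eta> \<longrightarrow> \<eta> \<le> 1 \<longrightarrow> (\<exists>\<kappa>. (\<forall>j<m. \<kappa> j \<in> dual_unit_ball \<and> \<kappa> j (w j) > t j) \<and>
       op_norm_on X (\<lambda>x. xs x + (\<Sum>j<m. \<kappa> j x)) \<ge> 1 + real m - \<eta> \<and>
       op_norm_on X (\<lambda>x. xs x + (\<Sum>j<m. \<kappa> j x)) \<ge> 1))"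
proof (induction m)
  case 0 then show ?case using xs by simp
next
  case (Suc m)
  show ?case
  proof (intro impI allI)
    fix \<eta> :: real assume sl: "\<forall>j<Suc m. \<exists>v0\<in>dual_unit_ball. v0 (w j) > t j"
      and h: "0 < \<eta>" "\<eta> \<le> 1"
    have h2: "0 < \<eta> / 2" "\<eta> / 2 \<le> 1" using h by auto
    have slm: "\<forall>j<m. \<exists>v0\<in>dual_unit_ball. v0 (w j) > t j" using sl by simp
    obtain \<kappa> where \<kappa>: "\<forall>j<m. \<kappa> j \<in> dual_unit_ball \<and> \<kappa> j (w j) > t j"
      "op_norm_on X (\<lambda>x. xs x + (\<Sum>j<m. \<kappa> j x)) \<ge> 1 + real m - \<eta> / 2"
      "op_norm_on X (\<lambda>x. xs x + (\<Sum>j<m. \<kappa> j x)) \<ge> 1"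
      using mp[OF Suc.IH slm, rule_format, OF h2] by blast
    define \<phi> where "\<phi> = (\<lambda>x. xs x + (\<Sum>j<m. \<kappa> j x))"
    have \<phi>d: "\<phi> \<in> dual_on X" unfolding \<phi>_def
    proof (rule dual_add[OF xs(1)])
      show "(\<lambda>x. \<Sum>j<m. \<kappa> j x) \<in> dual_on X"
        using \<kappa>(1) by (intro dual_sum) (auto intro: bl_dual dest: dual_unit_ballD)
    qed
    obtain v0 where v0: "v0 \<in> dual_unit_ball" "v0 (w m) > t m" using sl by blast
    obtain u where u: "u \<in> dual_unit_ball" "u (w m) > t m"
      "op_norm_on X (\<lambda>x. \<phi> x + u x) \<ge> op_norm_on X \<phi> + 1 - \<eta> / 2"
      using dstep[OF X Sd \<phi>d \<kappa>(3)[folded \<phi>_def] v0 h2(1)] by blast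
    define \<kappa>' where "\<kappa>' = \<kappa>(m := u)"
    have s: "(\<lambda>x. xs x + (\<Sum>j<Suc m. \<kappa>' j x)) = (\<lambda>x. \<phi> x + u x)"
    proof
      fix x
      have "(\<Sum>j<m. \<kappa>' j x) = (\<Sum>j<m. \<kappa> j x)" unfolding \<kappa>'_def by (rule sum.cong) auto
      then show "xs x + (\<Sum>j<Suc m. \<kappa>' j x) = \<phi> x + u x"
        unfolding \<phi>_def by (simp add: \<kappa>'_def)
    qed
    have "op_norm_on X (\<lambda>x. xs x + (\<Sum>j<Suc m. \<kappa>' j x)) \<ge> 1 + real (Suc m) - \<eta>"
      using u(3) \<kappa>(2) s unfolding \<phi>_def by simp
    moreover then have "op_norm_on X (\<lambda>x. xs x + (\<Sum>j<Suc m. \<kappa>' j x)) \<ge> 1" using h by simp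
    moreover have "\<forall>j<Suc m. \<kappa>' j \<in> dual_unit_ball \<and> \<kappa>' j (w j) > t j"
      unfolding \<kappa>'_def using \<kappa>(1) u(1,2) by (simp add: less_Suc_eq)
    ultimately show "\<exists>\<kappa>. (\<forall>j<Suc m. \<kappa> j \<in> dual_unit_ball \<and> \<kappa> j (w j) > t j) \<and>
       op_norm_on X (\<lambda>x. xs x + (\<Sum>j<Suc m. \<kappa> j x)) \<ge> 1 + real (Suc m) - \<eta> \<and>
       op_norm_on X (\<lambda>x. xs x + (\<Sum>j<Suc m. \<kappa> j x)) \<ge> 1"
      by blast
  qed
qed

lemma Sd_to_c:
  fixes X :: "'y::real_normed_vector set"
  assumes X: "subspace X" "X \<noteq> {0}" and Sd: "Sdprop X"
  shows "\<forall>\<epsilon>>0. \<forall>xs\<in>dual_on X. op_norm_on X xs = 1 \<longrightarrow>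
              (\<forall>U. openin weak_star_top U \<and> U \<inter> dual_unit_ball \<noteq> {} \<longrightarrow>
                (\<exists>V. openin weak_star_top V \<and> V \<inter> dual_unit_ball \<noteq> {} \<and>
                     V \<inter> dual_unit_ball \<subseteq> U \<inter> dual_unit_ball \<and>
                     (\<forall>v\<in>V \<inter> dual_unit_ball. op_norm_on X (\<lambda>x. v x + xs x) > 2 - \<epsilon>)))"
proof (intro allI impI ballI, elim conjE)
  fix \<epsilon> :: real and xs :: "'y \<Rightarrow> real" and U :: "('y \<Rightarrow> real) set"
  assume e: "\<epsilon> > 0" and xs: "xs \<in> dual_on X" and xs1: "op_norm_on X xs = 1"
    and U: "openin weak_star_top U" and Une: "U \<inter> dual_unit_ball \<noteq> {}"
  obtain v0 where v0: "v0 \<in> U" "v0 \<in> dual_unit_ball" using Une by blast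
  obtain I \<delta> where I: "finite I" "\<delta> > 0" and IU: "{v\<in>dual_space. \<forall>y\<in>I. \<bar>v y - v0 y\<bar> < \<delta>} \<subseteq> U"
    using weak_star_nbhd[OF U v0(1)] unfolding wsnb_def by blast
  define M where "M = (\<Sum>y\<in>I. norm y)"
  have bnd: "\<forall>y\<in>I. \<forall>v\<in>dual_unit_ball. \<bar>(\<lambda>(y::'y) (v::'y \<Rightarrow> real). v y) y v\<bar> \<le> M"
  proof (intro ballI)
    fix y :: 'y and v :: "'y \<Rightarrow> real" assume y: "y \<in> I" and v: "v \<in> dual_unit_ball"
    have "\<bar>v y\<bar> \<le> norm y" using dual_unit_ballD[OF v] by blast
    also have "\<dots> \<le> M" unfolding M_def using y I(1) by (intro member_le_sum) auto
    finally show "\<bar>(\<lambda>(y::'y) (v::'y \<Rightarrow> real). v y) y v\<bar> \<le> M" by simp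
  qed
  obtain m :: nat and lam c t where lam0: "\<forall>j<m. lam j \<ge> 0" and lam1: "(\<Sum>j<m. lam j) = 1"
    and slne: "\<forall>j<m. \<exists>k\<in>dual_unit_ball. (\<Sum>y\<in>I. c j y * k y) > t j"
    and close: "\<forall>\<kappa>. (\<forall>j<m. \<kappa> j \<in> dual_unit_ball \<and> (\<Sum>y\<in>I. c j y * \<kappa> j y) > t j) \<longrightarrow>
        (\<forall>y\<in>I. \<bar>(\<Sum>j<m. lam j * \<kappa> j y) - v0 y\<bar> < \<delta>)"
    using greedy_main[OF I(1) bnd v0(2) I(2)] by auto
  define w where "w j = (\<Sum>y\<in>I. c j y *\<^sub>R y)" for j
  have vw: "v (w j) = (\<Sum>y\<in>I. c j y * v y)" if "v \<in> dual_unit_ball" for v j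
  proof -
    have lv: "linear v" using dual_unit_ballD[OF that] bounded_linear.linear by blast
    have "v (w j) = (\<Sum>y\<in>I. v (c j y *\<^sub>R y))" unfolding w_def by (rule linear_sum[OF lv])
    also have "\<dots> = (\<Sum>y\<in>I. c j y * v y)" by (simp add: linear_scale[OF lv])
    finally show ?thesis .
  qed
  have slw: "\<forall>j<m. \<exists>v0\<in>dual_unit_ball. v0 (w j) > t j" using slne vw by auto
  define \<eta> where "\<eta> = min 1 (\<epsilon> / 5)"
  have \<eta>: "0 < \<eta>" "\<eta> \<le> 1" "5 * \<eta> \<le> \<epsilon>" unfolding \<eta>_def using e by auto
  obtain \<kappa> where \<kappa>: "\<forall>j<m. \<kappa> j \<in> dual_unit_ball \<and> \<kappa> j (w j) > t j"
    and nb: "op_norm_on X (\<lambda>x. xs x + (\<Sum>j<m. \<kappa> j x)) \<ge> 1 + real m - \<eta>"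
    using mp[OF diter[OF X Sd xs xs1, where m=m and w=w and t=t] slw, rule_format, OF \<eta>(1,2)] by blast
  have \<kappa>b: "\<kappa> j \<in> dual_unit_ball" if "j < m" for j using \<kappa> that by blast
  define \<phi> where "\<phi> = (\<lambda>x. xs x + (\<Sum>j<m. \<kappa> j x))"
  have \<phi>d: "\<phi> \<in> dual_on X" unfolding \<phi>_def
  proof (rule dual_add[OF xs])
    show "(\<lambda>x. \<Sum>j<m. \<kappa> j x) \<in> dual_on X"
      using \<kappa>b by (intro dual_sum) (auto intro: bl_dual dest: dual_unit_ballD)
  qed
  obtain x1 where x1: "x1 \<in> unit_ball_on X" "norm (\<phi> x1) > op_norm_on X \<phi> - \<eta>"
    using opn_approx[OF X(1) dual_opbnd[OF \<phi>d] \<eta>(1)] by blast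
  have x1X: "x1 \<in> X" using ubD[OF x1(1)] by simp
  define x' where "x' = (if \<phi> x1 \<ge> 0 then x1 else -x1)"
  have x'b: "x' \<in> unit_ball_on X" unfolding x'_def using ub_neg[OF X(1) x1(1)] x1(1) by simp
  have \<phi>x': "\<phi> x' = \<bar>\<phi> x1\<bar>" unfolding x'_def using lin_on_neg[OF dual_lin[OF \<phi>d] x1X] by simp
  have big: "\<phi> x' > 1 + real m - 2 * \<eta>" using \<phi>x' x1(2) nb unfolding \<phi>_def by simp
  have xs_le: "xs x' \<le> 1" using unit_dual_le1[OF X(1) xs xs1 x'b] by simp
  have k_le: "\<kappa> j x' \<le> 1" if "j < m" for j using unit_ball_le1[OF \<kappa>b[OF that] x'b] by simp
  have tot: "(1 - xs x') + (\<Sum>j<m. 1 - \<kappa> j x') < 2 * \<eta>"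
    using big unfolding \<phi>_def by (simp add: sum_subtractf)
  have nn: "(\<Sum>j<m. 1 - \<kappa> j x') \<ge> 0" using k_le by (intro sum_nonneg) auto
  have xsx: "xs x' > 1 - 2 * \<eta>" using tot nn by linarith
  have kx: "\<kappa> j x' > 1 - 2 * \<eta>" if j: "j < m" for j
  proof -
    have "1 - \<kappa> j x' \<le> (\<Sum>j<m. 1 - \<kappa> j x')"
      using j k_le by (intro member_le_sum) auto
    then show ?thesis using tot xs_le by linarith
  qed
  define u where "u = (\<lambda>y. \<Sum>j<m. lam j * \<kappa> j y)"
  have ubl: "bounded_linear u" unfolding u_def
    using \<kappa>b by (intro bounded_linear_sum bounded_linear_const_mult) (auto dest: dual_unit_ballD)
  have uabs: "\<bar>u y\<bar> \<le> norm y" for y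
  proof -
    have "\<bar>u y\<bar> \<le> (\<Sum>j<m. \<bar>lam j * \<kappa> j y\<bar>)" unfolding u_def by (rule sum_abs)
    also have "\<dots> \<le> (\<Sum>j<m. lam j * norm y)"
    proof (rule sum_mono)
      fix j assume "j \<in> {..<m}"
      then have "j < m" by simp
      then have "\<bar>\<kappa> j y\<bar> \<le> norm y" "lam j \<ge> 0" using \<kappa>b lam0 dual_unit_ballD by blast+
      then show "\<bar>lam j * \<kappa> j y\<bar> \<le> lam j * norm y" by (simp add: abs_mult mult_left_mono)
    qed
    also have "\<dots> = norm y" using lam1 by (simp add: sum_distrib_right[symmetric])
    finally show ?thesis .
  qed
  have ub: "u \<in> dual_unit_ball" using dual_unit_ballI[OF ubl uabs] .
  have uds: "u \<in> dual_space" using ubl unfolding dual_space_def by simp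
  have uU: "u \<in> U"
  proof -
    have "\<forall>j<m. \<kappa> j \<in> dual_unit_ball \<and> (\<Sum>y\<in>I. c j y * \<kappa> j y) > t j"
      using \<kappa> vw by auto
    then have "\<forall>y\<in>I. \<bar>u y - v0 y\<bar> < \<delta>" using close unfolding u_def by blast
    then show ?thesis using IU uds by blast
  qed
  have ux: "u x' \<ge> 1 - 2 * \<eta>"
  proof -
    have "u x' \<ge> (\<Sum>j<m. lam j * (1 - 2 * \<eta>))"
      unfolding u_def using lam0 kx by (intro sum_mono mult_left_mono) (auto simp: less_imp_le)
    moreover have "(\<Sum>j<m. lam j * (1 - 2 * \<eta>)) = 1 - 2 * \<eta>" using lam1 by (simp add: sum_distrib_right[symmetric])
    ultimately show ?thesis by simp
  qed
  define V where "V = U \<inter> {v\<in>dual_space. v x' \<in> {1 - 3 * \<eta><..}}"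
  have Vo: "openin weak_star_top V" unfolding V_def
    using U weak_star_open_basic[of "{1 - 3 * \<eta><..}" x'] by (intro openin_Int) auto
  have uV: "u \<in> V" unfolding V_def using uU uds ux \<eta>(1) by simp
  show "\<exists>V. openin weak_star_top V \<and> V \<inter> dual_unit_ball \<noteq> {} \<and>
                     V \<inter> dual_unit_ball \<subseteq> U \<inter> dual_unit_ball \<and>
                     (\<forall>v\<in>V \<inter> dual_unit_ball. op_norm_on X (\<lambda>x. v x + xs x) > 2 - \<epsilon>)"
  proof (intro exI[of _ V] conjI)
    show "V \<inter> dual_unit_ball \<noteq> {}" using uV ub by blast
    show "V \<inter> dual_unit_ball \<subseteq> U \<inter> dual_unit_ball" unfolding V_def by blast
    show "\<forall>v\<in>V \<inter> dual_unit_ball. op_norm_on X (\<lambda>x. v x + xs x) > 2 - \<epsilon>"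
    proof
      fix v assume vV: "v \<in> V \<inter> dual_unit_ball"
      then have vx: "v x' > 1 - 3 * \<eta>" unfolding V_def by simp
      have vb: "bounded_linear v" using vV dual_unit_ballD by blast
      have ob: "opbnd X (\<lambda>x. v x + xs x)" using opbnd_add[OF bl_opbnd[OF vb] dual_opbnd[OF xs]] .
      have "\<bar>v x' + xs x'\<bar> \<le> op_norm_on X (\<lambda>x. v x + xs x)" using opn_ge[OF ob x'b] by simp
      then show "op_norm_on X (\<lambda>x. v x + xs x) > 2 - \<epsilon>" using vx xsx \<eta>(3) by linarith
    qed
  qed (rule Vo)
qed

lemma c_to_Sd:
  fixes X :: "'y::real_normed_vector set"
  assumes X: "subspace X" and C: "\<forall>\<epsilon>>0. \<forall>xs\<in>dual_on X. op_norm_on X xs = 1 \<longrightarrow>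
              (\<forall>U. openin weak_star_top U \<and> U \<inter> dual_unit_ball \<noteq> {} \<longrightarrow>
                (\<exists>V. openin weak_star_top V \<and> V \<inter> dual_unit_ball \<noteq> {} \<and>
                     V \<inter> dual_unit_ball \<subseteq> U \<inter> dual_unit_ball \<and>
                     (\<forall>v\<in>V \<inter> dual_unit_ball. op_norm_on X (\<lambda>x. v x + xs x) > 2 - \<epsilon>)))"
  shows "Sdprop X"
  unfolding Sdprop_def
proof (intro allI impI ballI)
  fix \<epsilon> :: real and y :: 'y and xs
  assume e: "\<epsilon> > 0" and y: "norm y = 1" and xs: "xs \<in> dual_on X" and xs1: "op_norm_on X xs = 1"
  define U where "U = {v\<in>dual_space. v y \<in> {1 - \<epsilon><..}}"
  have Uo: "openin weak_star_top U" unfolding U_def by (rule weak_star_open_basic) simp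
  obtain \<phi> where \<phi>: "bounded_linear \<phi>" "\<forall>x. \<bar>\<phi> x\<bar> \<le> norm x" "\<phi> y = norm y"
    using hahn_banach_norming[of y] by blast
  have "\<phi> \<in> U" unfolding U_def dual_space_def using \<phi> y e by simp
  moreover have "\<phi> \<in> dual_unit_ball" using dual_unit_ballI[OF \<phi>(1)] \<phi>(2) by blast
  ultimately have Une: "U \<inter> dual_unit_ball \<noteq> {}" by blast
  obtain V where V: "V \<inter> dual_unit_ball \<noteq> {}" "V \<inter> dual_unit_ball \<subseteq> U \<inter> dual_unit_ball"
    "\<forall>v\<in>V \<inter> dual_unit_ball. op_norm_on X (\<lambda>x. v x + xs x) > 2 - \<epsilon>"
    using C[rule_format, OF e xs xs1 conjI[OF Uo Une]] by blast
  then obtain v where v: "v \<in> V \<inter> dual_unit_ball" by blast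
  then have "v \<in> U" "v \<in> dual_unit_ball" using V(2) by blast+
  then show "\<exists>v\<in>dual_unit_ball. v y > 1 - \<epsilon> \<and> op_norm_on X (\<lambda>x. v x + xs x) > 2 - \<epsilon>"
    using V(3) v unfolding U_def by blast
qed

theorem mainTheorem1:
  fixes X :: "'y::banach set"
  assumes "subspace X" and "closed X" and "X \<noteq> {0}"
  shows "(daugavet_pair X \<longleftrightarrow>
           (\<forall>\<epsilon>>0. \<forall>y. norm y = 1 \<longrightarrow>
              (\<forall>U. openin (weak_top X) U \<and> U \<inter> unit_ball_on X \<noteq> {} \<longrightarrow>
                (\<exists>V. openin (weak_top X) V \<and> V \<inter> unit_ball_on X \<noteq> {} \<and>
                     V \<inter> unit_ball_on X \<subseteq> U \<inter> unit_ball_on X \<and>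
                     (\<forall>v\<in>V \<inter> unit_ball_on X. norm (v + y) > 2 - \<epsilon>)))))
       \<and> (daugavet_pair X \<longleftrightarrow>
           (\<forall>\<epsilon>>0. \<forall>xs\<in>dual_on X. op_norm_on X xs = 1 \<longrightarrow>
              (\<forall>U. openin weak_star_top U \<and> U \<inter> dual_unit_ball \<noteq> {} \<longrightarrow>
                (\<exists>V. openin weak_star_top V \<and> V \<inter> dual_unit_ball \<noteq> {} \<and>
                     V \<inter> dual_unit_ball \<subseteq> U \<inter> dual_unit_ball \<and>
                     (\<forall>v\<in>V \<inter> dual_unit_ball. op_norm_on X (\<lambda>x. v x + xs x) > 2 - \<epsilon>)))))"
proof -
  have aS: "daugavet_pair X \<longleftrightarrow> Sprop X" using a_to_S[OF assms(1)] S_to_a[OF assms(1)] by blast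
  have SSd: "Sprop X \<longleftrightarrow> Sdprop X" using S_to_Sd[OF assms(1)] Sd_to_S[OF assms(1)] by blast
  show ?thesis
  proof
    show "daugavet_pair X \<longleftrightarrow>
           (\<forall>\<epsilon>>0. \<forall>y. norm y = 1 \<longrightarrow>
              (\<forall>U. openin (weak_top X) U \<and> U \<inter> unit_ball_on X \<noteq> {} \<longrightarrow>
                (\<exists>V. openin (weak_top X) V \<and> V \<inter> unit_ball_on X \<noteq> {} \<and>
                     V \<inter> unit_ball_on X \<subseteq> U \<inter> unit_ball_on X \<and>
                     (\<forall>v\<in>V \<inter> unit_ball_on X. norm (v + y) > 2 - \<epsilon>))))"
    proof
      assume "daugavet_pair X"
      then show "\<forall>\<epsilon>>0. \<forall>y. norm y = 1 \<longrightarrow>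
              (\<forall>U. openin (weak_top X) U \<and> U \<inter> unit_ball_on X \<noteq> {} \<longrightarrow>
                (\<exists>V. openin (weak_top X) V \<and> V \<inter> unit_ball_on X \<noteq> {} \<and>
                     V \<inter> unit_ball_on X \<subseteq> U \<inter> unit_ball_on X \<and>
                     (\<forall>v\<in>V \<inter> unit_ball_on X. norm (v + y) > 2 - \<epsilon>)))"
        using S_to_b[OF assms(1,3)] aS by blast
    next
      assume "\<forall>\<epsilon>>0. \<forall>y. norm y = 1 \<longrightarrow>
              (\<forall>U. openin (weak_top X) U \<and> U \<inter> unit_ball_on X \<noteq> {} \<longrightarrow>
                (\<exists>V. openin (weak_top X) V \<and> V \<inter> unit_ball_on X \<noteq> {} \<and>
                     V \<inter> unit_ball_on X \<subseteq> U \<inter> unit_ball_on X \<and>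
                     (\<forall>v\<in>V \<inter> unit_ball_on X. norm (v + y) > 2 - \<epsilon>)))"
      then have "Sprop X" by (rule b_to_S[OF assms(1)])
      then show "daugavet_pair X" using aS by blast
    qed
  next
    show "daugavet_pair X \<longleftrightarrow>
           (\<forall>\<epsilon>>0. \<forall>xs\<in>dual_on X. op_norm_on X xs = 1 \<longrightarrow>
              (\<forall>U. openin weak_star_top U \<and> U \<inter> dual_unit_ball \<noteq> {} \<longrightarrow>
                (\<exists>V. openin weak_star_top V \<and> V \<inter> dual_unit_ball \<noteq> {} \<and>
                     V \<inter> dual_unit_ball \<subseteq> U \<inter> dual_unit_ball \<and>
                     (\<forall>v\<in>V \<inter> dual_unit_ball. op_norm_on X (\<lambda>x. v x + xs x) > 2 - \<epsilon>))))"
    proof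
      assume "daugavet_pair X"
      then have "Sdprop X" using aS SSd by blast
      then show "\<forall>\<epsilon>>0. \<forall>xs\<in>dual_on X. op_norm_on X xs = 1 \<longrightarrow>
              (\<forall>U. openin weak_star_top U \<and> U \<inter> dual_unit_ball \<noteq> {} \<longrightarrow>
                (\<exists>V. openin weak_star_top V \<and> V \<inter> dual_unit_ball \<noteq> {} \<and>
                     V \<inter> dual_unit_ball \<subseteq> U \<inter> dual_unit_ball \<and>
                     (\<forall>v\<in>V \<inter> dual_unit_ball. op_norm_on X (\<lambda>x. v x + xs x) > 2 - \<epsilon>)))"
        by (rule Sd_to_c[OF assms(1,3)])
    next
      assume "\<forall>\<epsilon>>0. \<forall>xs\<in>dual_on X. op_norm_on X xs = 1 \<longrightarrow>
              (\<forall>U. openin weak_star_top U \<and> U \<inter> dual_unit_ball \<noteq> {} \<longrightarrow>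
                (\<exists>V. openin weak_star_top V \<and> V \<inter> dual_unit_ball \<noteq> {} \<and>
                     V \<inter> dual_unit_ball \<subseteq> U \<inter> dual_unit_ball \<and>
                     (\<forall>v\<in>V \<inter> dual_unit_ball. op_norm_on X (\<lambda>x. v x + xs x) > 2 - \<epsilon>)))"
      then have "Sdprop X" by (rule c_to_Sd[OF assms(1)])
      then show "daugavet_pair X" using aS SSd by blast
    qed
  qed
qed

end
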